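(* Let $G=(V,E)$ be a countable graph with degrees bounded by $\Delta<\infty$, $\alpha\in[0,1/2)$, $\{N_t\}$ the weakly reinforced Pólya urn process on $G$ with exponent $\alpha$, $X_t=N_t/t$, and let $\mu$ be a non-vanishing equilibrium on $G$ with $\mu(e)\ge 2/\Delta^{1/(1-\alpha)}$ for all $e$. Let $\varrho>1$ and $e\in E$. Then almost surely on the event that $\mathcal C(e')\subseteq[\varrho^{-1}\mu(e'),\varrho\mu(e')]$ for all $e'\in E_e$, we have $\mathcal C(e)\subseteq[\varrho^{-2\alpha}\mu(e),\varrho^{2\alpha}\mu(e)]$.
   Context: $E_v=\{e\in E:v\in e\}$, $E_e=\{e'\in E:e'\cap e\ne\emptyset\}$. Process: $\{P_v\}_{v\in V}$ i.i.d. Poisson point processes on $[0,\infty)\times[0,1]$ of intensity 1; $N_0\equiv1$; with $\mathrm{pol}_{v,e}(N)=N(e)^\alpha/\sum_{e'\in E_v}N(e')^\alpha$ and an enumeration $E_v=\{e_1,\dots,e_{\deg(v)}\}$, at each atom $(t,u)$ of $P_v$ the weight of $e_i$ increases by 1 if $u\in(\sum_{j<i}\mathrm{pol}_{v,e_j}(N_t),\sum_{j\le i}\mathrm{pol}_{v,e_j}(N_t)]$ (weights just before $t$). An equilibrium is $\mu\in[0,\infty)^E$ with $\mu(e)=\sum_{v\in e}\mu(e)^\alpha/\sum_{e'\in E_v}\mu(e')^\alpha$ whenever $\mu(e)>0$; non-vanishing means $\mu>0$ everywhere. $X_-(e)=\liminf_{t\to\infty}X_t(e)$, $X_+(e)=\limsup_{t\to\infty}X_t(e)$,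 $\mathcal C(e)=[X_-(e),X_+(e)]$. *)

theory Defs
  imports "HOL-Probability.Probability"
begin

definition Ev :: "'a set set \<Rightarrow> 'a \<Rightarrow> 'a set set" where
  "Ev E v = {e \<in> E. v \<in> e}"

definition Ee :: "'a set set \<Rightarrow> 'a set \<Rightarrow> 'a set set" where
  "Ee E e = {e' \<in> E. e' \<inter> e \<noteq> {}}"

definition countable_graph_bdeg :: "'a set \<Rightarrow> 'a set set \<Rightarrow> nat \<Rightarrow> bool" where
  "countable_graph_bdeg V E \<Delta> \<longleftrightarrow>
     countable V \<and> (\<forall>e\<in>E. e \<subseteq> V \<and> card e = 2) \<and>
     (\<forall>v\<in>V. finite (Ev E v) \<and> card (Ev E v) \<le> \<Delta>)"

text \<open>Power with the convention 0^0 = 1 (Isabelle's powr has 0 powr 0 = 0).\<close>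

definition pw :: "real \<Rightarrow> real \<Rightarrow> real" where
  "pw x a = (if x = 0 then (if a = 0 then 1 else 0) else x powr a)"

definition equilibrium :: "'a set set \<Rightarrow> real \<Rightarrow> ('a set \<Rightarrow> real) \<Rightarrow> bool" where
  "equilibrium E \<alpha> \<mu> \<longleftrightarrow>
     (\<forall>e\<in>E. 0 \<le> \<mu> e) \<and>
     (\<forall>e\<in>E. 0 < \<mu> e \<longrightarrow>
        \<mu> e = (\<Sum>v\<in>e. pw (\<mu> e) \<alpha> / (\<Sum>e'\<in>Ev E v. pw (\<mu> e') \<alpha>)))"

definition non_vanishing :: "'a set set \<Rightarrow> ('a set \<Rightarrow> real) \<Rightarrow> bool" where
  "non_vanishing E \<mu> \<longleftrightarrow> (\<forall>e\<in>E. 0 < \<mu> e)"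

text \<open>An independent family (indexed by V) of Poisson point processes of intensity 1 on
  [0,\<infinity>) \<times> [0,1], each given as its random set of atoms P v \<omega>:
  counts on bounded Borel sets are Poisson with mean the Lebesgue measure, and counts on
  pairwise disjoint sets (for the same vertex) or for distinct vertices are independent.\<close>

definition ppp_domain :: "(real \<times> real) set set" where
  "ppp_domain = {A. A \<in> sets lborel \<and> A \<subseteq> {0..} \<times> {0..1} \<and> emeasure lborel A < \<infinity>}"

definition iid_ppp_family ::
  "'w measure \<Rightarrow> 'a set \<Rightarrow> ('a \<Rightarrow> 'w \<Rightarrow> (real \<times> real) set) \<Rightarrow> bool" where
  "iid_ppp_family M V P \<longleftrightarrow>
     prob_space M \<and>
     (\<forall>v\<in>V. \<forall>A\<in>ppp_domain.
        (AE \<omega> in M. finite (P v \<omega> \<inter> A)) \<and>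
        (\<lambda>\<omega>. card (P v \<omega> \<inter> A)) \<in> measurable M (count_space UNIV) \<and>
        (\<forall>k::nat. measure M {\<omega> \<in> space M. card (P v \<omega> \<inter> A) = k}
                 = (measure lborel A) ^ k / fact k * exp (- measure lborel A))) \<and>
     (\<forall>I. I \<subseteq> V \<times> ppp_domain \<longrightarrow>
        (\<forall>i\<in>I. \<forall>j\<in>I. i \<noteq> j \<longrightarrow> fst i \<noteq> fst j \<or> snd i \<inter> snd j = {}) \<longrightarrow>
        prob_space.indep_vars M (\<lambda>_. count_space UNIV)
          (\<lambda>i \<omega>. card (P (fst i) \<omega> \<inter> snd i)) I)"

definition pol :: "'a set set \<Rightarrow> real \<Rightarrow> 'a \<Rightarrow> ('a set \<Rightarrow> nat) \<Rightarrow> 'a set \<Rightarrow> real" where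
  "pol E \<alpha> v N e = pw (real (N e)) \<alpha> / (\<Sum>e'\<in>Ev E v. pw (real (N e')) \<alpha>)"

text \<open>An atom with mark u at vertex v (weights N just before) reinforces edge e iff
  e = e_i (w.r.t. the enumeration enum v) and u lies in
  (sum_{j<i} pol(e_j), sum_{j<=i} pol(e_j)].\<close>

definition selects ::
  "'a set set \<Rightarrow> real \<Rightarrow> ('a \<Rightarrow> nat \<Rightarrow> 'a set) \<Rightarrow> 'a \<Rightarrow> ('a set \<Rightarrow> nat) \<Rightarrow> real \<Rightarrow> 'a set \<Rightarrow> bool"
  where
  "selects E \<alpha> enum v N u e \<longleftrightarrow>
     (\<exists>i < card (Ev E v). enum v i = e \<and>
        (\<Sum>j<i. pol E \<alpha> v N (enum v j)) < u \<and> u \<le> (\<Sum>j\<le>i. pol E \<alpha> v N (enum v j)))"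

text \<open>Npre \<omega> t = N_{t-} (weights just before time t); it satisfies the pathwise
  defining equation (a.s.).\<close>

definition urn_pre ::
  "'w measure \<Rightarrow> 'a set set \<Rightarrow> real \<Rightarrow> ('a \<Rightarrow> nat \<Rightarrow> 'a set) \<Rightarrow>
   ('a \<Rightarrow> 'w \<Rightarrow> (real \<times> real) set) \<Rightarrow> ('w \<Rightarrow> real \<Rightarrow> 'a set \<Rightarrow> nat) \<Rightarrow> bool" where
  "urn_pre M E \<alpha> enum P Npre \<longleftrightarrow>
     (AE \<omega> in M. \<forall>t. \<forall>e\<in>E.
        Npre \<omega> t e = 1 + (\<Sum>v\<in>e. card {(s, u) \<in> P v \<omega>. 0 \<le> s \<and> s < t \<and>
                                        selects E \<alpha> enum v (Npre \<omega> s) u e}))"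

text \<open>N_t (right-continuous version), obtained from N_{t-}.\<close>

definition urn_N ::
  "'a set set \<Rightarrow> real \<Rightarrow> ('a \<Rightarrow> nat \<Rightarrow> 'a set) \<Rightarrow>
   ('a \<Rightarrow> 'w \<Rightarrow> (real \<times> real) set) \<Rightarrow> ('w \<Rightarrow> real \<Rightarrow> 'a set \<Rightarrow> nat) \<Rightarrow> 'w \<Rightarrow> real \<Rightarrow> 'a set \<Rightarrow> nat"
  where
  "urn_N E \<alpha> enum P Npre \<omega> t e =
     1 + (\<Sum>v\<in>e. card {(s, u) \<in> P v \<omega>. 0 \<le> s \<and> s \<le> t \<and>
                                 selects E \<alpha> enum v (Npre \<omega> s) u e})"

definition cluster :: "('w \<Rightarrow> real \<Rightarrow> 'a set \<Rightarrow> nat) \<Rightarrow> 'w \<Rightarrow> 'a set \<Rightarrow> ereal set" where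
  "cluster N \<omega> e =
     {Liminf at_top (\<lambda>t::real. ereal (real (N \<omega> t e) / t)) ..
      Limsup at_top (\<lambda>t::real. ereal (real (N \<omega> t e) / t))}"

end

theory Submission
  imports Defs "HOL-Real_Asymp.Real_Asymp"
begin


lemma pw_nonneg: "x \<ge> 0 \<Longrightarrow> pw x a \<ge> 0"
  by (simp add: pw_def)

lemma pw_pos_eq: "x > 0 \<Longrightarrow> pw x a = x powr a"
  by (simp add: pw_def)

lemma pol_nonneg: "pol E \<alpha> v N e \<ge> 0"
  unfolding pol_def by (intro divide_nonneg_nonneg sum_nonneg pw_nonneg) auto

lemma pol_sum_le1:
  assumes "finite (Ev E v)"
  shows "(\<Sum>e'\<in>Ev E v. pol E \<alpha> v N e') \<le> 1"
proof -
  have "(\<Sum>e'\<in>Ev E v. pol E \<alpha> v N e') = (\<Sum>e'\<in>Ev E v. pw (real (N e')) \<alpha>) / (\<Sum>e'\<in>Ev E v. pw (real (N e')) \<alpha>)"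
    unfolding pol_def sum_divide_distrib by (rule refl)
  also have "\<dots> \<le> 1" by (simp add: divide_le_eq_1)
  finally show ?thesis .
qed

lemma sum_enum_le1:
  assumes fin: "finite (Ev E v)" and bij: "bij_betw (enum v) {..<card (Ev E v)} (Ev E v)"
    and i: "i \<le> card (Ev E v)"
  shows "(\<Sum>j<i. pol E \<alpha> v N (enum v j)) \<le> 1"
proof -
  have "(\<Sum>j<i. pol E \<alpha> v N (enum v j)) \<le> (\<Sum>j<card (Ev E v). pol E \<alpha> v N (enum v j))"
    using i by (intro sum_mono2) (auto simp: pol_nonneg)
  also have "\<dots> = (\<Sum>e'\<in>Ev E v. pol E \<alpha> v N e')"
    using sum.reindex_bij_betw[OF bij, of "pol E \<alpha> v N"] by simp
  also have "\<dots> \<le> 1" by (rule pol_sum_le1[OF fin])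
  finally show ?thesis .
qed

lemma selects_u:
  assumes fin: "finite (Ev E v)" and bij: "bij_betw (enum v) {..<card (Ev E v)} (Ev E v)"
    and s: "selects E \<alpha> enum v N u e"
  shows "0 < u" "u \<le> 1"
proof -
  obtain i where i: "i < card (Ev E v)" "(\<Sum>j<i. pol E \<alpha> v N (enum v j)) < u"
     "u \<le> (\<Sum>j\<le>i. pol E \<alpha> v N (enum v j))"
    using s unfolding selects_def by blast
  have "0 \<le> (\<Sum>j<i. pol E \<alpha> v N (enum v j))" by (intro sum_nonneg pol_nonneg)
  then show "0 < u" using i by linarith
  have "(\<Sum>j\<le>i. pol E \<alpha> v N (enum v j)) = (\<Sum>j<Suc i. pol E \<alpha> v N (enum v j))"
    by (simp add: lessThan_Suc_atMost)
  also have "\<dots> \<le> 1" using sum_enum_le1[of E v enum "Suc i" \<alpha> N] fin bij i by auto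
  finally show "u \<le> 1" using i by linarith
qed

lemma selects_iff:
  assumes bij: "bij_betw (enum v) {..<card (Ev E v)} (Ev E v)"
    and i: "i < card (Ev E v)" "enum v i = e"
  shows "selects E \<alpha> enum v N u e \<longleftrightarrow>
     (\<Sum>j<i. pol E \<alpha> v N (enum v j)) < u \<and> u \<le> (\<Sum>j<i. pol E \<alpha> v N (enum v j)) + pol E \<alpha> v N e"
proof -
  have uniq: "i' = i" if "i' < card (Ev E v)" "enum v i' = e" for i'
    using bij_betw_imp_inj_on[OF bij] that i by (auto simp: inj_on_def)
  have sm: "(\<Sum>j\<le>i. pol E \<alpha> v N (enum v j)) = (\<Sum>j<i. pol E \<alpha> v N (enum v j)) + pol E \<alpha> v N e"
    using i by (simp add: lessThan_Suc_atMost[symmetric])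
  show ?thesis
  proof
    assume "selects E \<alpha> enum v N u e"
    then obtain i' where i': "i' < card (Ev E v)" "enum v i' = e"
      "(\<Sum>j<i'. pol E \<alpha> v N (enum v j)) < u" "u \<le> (\<Sum>j\<le>i'. pol E \<alpha> v N (enum v j))"
      unfolding selects_def by blast
    then have "i' = i" using uniq by blast
    then show "(\<Sum>j<i. pol E \<alpha> v N (enum v j)) < u \<and> u \<le> (\<Sum>j<i. pol E \<alpha> v N (enum v j)) + pol E \<alpha> v N e"
      using i' sm by simp
  next
    assume "(\<Sum>j<i. pol E \<alpha> v N (enum v j)) < u \<and> u \<le> (\<Sum>j<i. pol E \<alpha> v N (enum v j)) + pol E \<alpha> v N e"
    then show "selects E \<alpha> enum v N u e" unfolding selects_def using i sm by (intro exI[of _ i]) simp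
  qed
qed

lemma frac_le:
  fixes y Y S S' :: real
  assumes "0 \<le> y" "y \<le> Y" "0 < Y" "0 \<le> S'" "S' \<le> S"
  shows "y / (y + S) \<le> Y / (Y + S')"
proof -
  have "y / (y + S) \<le> Y / (Y + S)"
  proof (cases "y + S = 0")
    case True then show ?thesis using assms by simp
  next
    case False
    then have "y + S > 0" using assms by linarith
    moreover have "S \<ge> 0" using assms by linarith
    ultimately show ?thesis using assms by (simp add: divide_simps) (simp add: algebra_simps mult_left_mono)
  qed
  also have "\<dots> \<le> Y / (Y + S')" using assms by (intro divide_left_mono) auto
  finally show ?thesis .
qed

lemma pw_ratio:
  fixes x x' \<eta> \<alpha> :: real
  assumes "0 < x" "x \<le> x'" "x' \<le> (1+\<eta>) * x" "0 \<le> \<eta>" "0 \<le> \<alpha>" "\<alpha> \<le> 1"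
  shows "pw x \<alpha> \<le> pw x' \<alpha>" "pw x' \<alpha> \<le> (1+\<eta>) * pw x \<alpha>"
proof -
  have x': "x' > 0" using assms by linarith
  show "pw x \<alpha> \<le> pw x' \<alpha>" using assms x' by (simp add: pw_def powr_mono2)
  have "pw x' \<alpha> = x' powr \<alpha>" using x' by (simp add: pw_def)
  also have "\<dots> \<le> ((1+\<eta>) * x) powr \<alpha>" using assms x' by (intro powr_mono2) auto
  also have "\<dots> = (1+\<eta>) powr \<alpha> * x powr \<alpha>" using assms by (simp add: powr_mult)
  also have "(1+\<eta>) powr \<alpha> \<le> (1+\<eta>) powr 1" using assms by (intro powr_mono) auto
  then have "(1+\<eta>) powr \<alpha> * x powr \<alpha> \<le> (1+\<eta>) * x powr \<alpha>" using assms by (intro mult_right_mono) auto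
  finally show "pw x' \<alpha> \<le> (1+\<eta>) * pw x \<alpha>" using assms by (simp add: pw_def)
qed

lemma pol_ratio:
  fixes N N' :: "'a set \<Rightarrow> nat"
  assumes fin: "finite (Ev E v)" and e': "e' \<in> Ev E v"
    and b: "\<And>f. f \<in> Ev E v \<Longrightarrow> 1 \<le> N f \<and> N f \<le> N' f \<and> real (N' f) \<le> (1+\<eta>) * real (N f)"
    and \<eta>: "0 \<le> \<eta>" and \<alpha>: "0 \<le> \<alpha>" "\<alpha> \<le> 1"
  shows "pol E \<alpha> v N' e' \<le> (1+\<eta>) * pol E \<alpha> v N e'" "pol E \<alpha> v N e' \<le> (1+\<eta>) * pol E \<alpha> v N' e'"
proof -
  let ?a = "\<lambda>f. pw (real (N f)) \<alpha>" and ?a' = "\<lambda>f. pw (real (N' f)) \<alpha>"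
  have r1: "?a f \<le> ?a' f" and r2: "?a' f \<le> (1+\<eta>) * ?a f" and p: "?a f > 0" if "f \<in> Ev E v" for f
  proof -
    have "0 < real (N f)" "real (N f) \<le> real (N' f)" "real (N' f) \<le> (1+\<eta>) * real (N f)"
      using b[OF that] by auto
    from pw_ratio[OF this \<eta> \<alpha>] show "?a f \<le> ?a' f" "?a' f \<le> (1+\<eta>) * ?a f" by auto
    show "?a f > 0" using b[OF that] by (simp add: pw_def)
  qed
  have S: "(\<Sum>f\<in>Ev E v. ?a f) \<le> (\<Sum>f\<in>Ev E v. ?a' f)" by (intro sum_mono r1)
  have Spos: "(\<Sum>f\<in>Ev E v. ?a f) > 0" using fin e' p by (intro sum_pos2[of _ e']) (auto intro: less_imp_le)
  have S2: "(\<Sum>f\<in>Ev E v. ?a' f) \<le> (1+\<eta>) * (\<Sum>f\<in>Ev E v. ?a f)"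
    unfolding sum_distrib_left by (intro sum_mono r2)
  have Spos': "(\<Sum>f\<in>Ev E v. ?a' f) > 0" using S Spos by linarith
  have "pol E \<alpha> v N' e' = ?a' e' / (\<Sum>f\<in>Ev E v. ?a' f)" by (simp add: pol_def)
  also have "\<dots> \<le> ?a' e' / (\<Sum>f\<in>Ev E v. ?a f)"
    using S Spos p[OF e'] r1[OF e'] by (intro divide_left_mono) auto
  also have "\<dots> \<le> ((1+\<eta>) * ?a e') / (\<Sum>f\<in>Ev E v. ?a f)"
    using r2[OF e'] Spos by (intro divide_right_mono) auto
  finally show "pol E \<alpha> v N' e' \<le> (1+\<eta>) * pol E \<alpha> v N e'" by (simp add: pol_def)
  have "pol E \<alpha> v N e' = ?a e' / (\<Sum>f\<in>Ev E v. ?a f)" by (simp add: pol_def)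
  also have "\<dots> \<le> ?a' e' / (\<Sum>f\<in>Ev E v. ?a f)"
    using r1[OF e'] Spos by (intro divide_right_mono) auto
  also have "\<dots> \<le> ?a' e' / ((\<Sum>f\<in>Ev E v. ?a' f) / (1+\<eta>))"
  proof (rule divide_left_mono)
    show "(\<Sum>f\<in>Ev E v. ?a' f) / (1+\<eta>) \<le> (\<Sum>f\<in>Ev E v. ?a f)"
      using S2 \<eta> by (subst pos_divide_le_eq) (auto simp: mult.commute)
    show "0 \<le> ?a' e'" using p[OF e'] r1[OF e'] by linarith
    show "0 < (\<Sum>f\<in>Ev E v. ?a f) * ((\<Sum>f\<in>Ev E v. ?a' f) / (1+\<eta>))"
      using Spos Spos' \<eta> by simp
  qed
  also have "\<dots> = (1+\<eta>) * (?a' e' / (\<Sum>f\<in>Ev E v. ?a' f))" using \<eta> Spos' by (simp add: field_simps)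
  finally show "pol E \<alpha> v N e' \<le> (1+\<eta>) * pol E \<alpha> v N' e'" by (simp add: pol_def)
qed
definition wbox :: "nat \<Rightarrow> real \<Rightarrow> real \<Rightarrow> (real \<times> real) set" where
  "wbox n c d = {real n ^ 2..<real (Suc n) ^ 2} \<times> {c<..d}"

locale upath =
  fixes V :: "'a set" and E :: "'a set set" and \<alpha> :: real and enum :: "'a \<Rightarrow> nat \<Rightarrow> 'a set"
    and P :: "'a \<Rightarrow> (real \<times> real) set" and Np :: "real \<Rightarrow> 'a set \<Rightarrow> nat" and e :: "'a set"
  assumes Esub: "\<And>f. f \<in> E \<Longrightarrow> f \<subseteq> V \<and> card f = 2"
    and Evfin: "\<And>v. v \<in> V \<Longrightarrow> finite (Ev E v)"
    and enum: "\<And>v. v \<in> V \<Longrightarrow> bij_betw (enum v) {..<card (Ev E v)} (Ev E v)"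
    and alpha: "0 \<le> \<alpha>" "\<alpha> \<le> 1"
    and e: "e \<in> E"
    and eq: "\<And>t f. f \<in> E \<Longrightarrow> Np t f = 1 + (\<Sum>v\<in>f. card {(s, u) \<in> P v. 0 \<le> s \<and> s < t \<and>
                                        selects E \<alpha> enum v (Np s) u f})"
    and fin: "\<And>v T. v \<in> V \<Longrightarrow> finite (P v \<inter> ({0..T} \<times> {0..1}))"
    and lln: "\<And>v k l m. v \<in> V \<Longrightarrow> k < l \<Longrightarrow> l \<le> m \<Longrightarrow> 2 \<le> m \<Longrightarrow>
       eventually (\<lambda>n. \<bar>real (card (P v \<inter> wbox n (real k / real m) (real l / real m)))
            - (2 * real n + 1) * (real l / real m - real k / real m)\<bar>
        < (1 / real m) * ((2 * real n + 1) * (real l / real m - real k / real m))) sequentially"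
begin

definition Nt :: "real \<Rightarrow> 'a set \<Rightarrow> nat" where
  "Nt t f = 1 + (\<Sum>v\<in>f. card {(s, u) \<in> P v. 0 \<le> s \<and> s \<le> t \<and> selects E \<alpha> enum v (Np s) u f})"

lemma fin_f: "f \<in> E \<Longrightarrow> finite f"
  using Esub[of f] by (auto intro: card_ge_0_finite)

lemma sel_sub:
  assumes v: "v \<in> V" and a: "0 \<le> a"
  shows "{(s, u) \<in> P v. a \<le> s \<and> s \<le> b \<and> selects E \<alpha> enum v (N s) u f} \<subseteq> P v \<inter> ({0..b} \<times> {0..1})"
proof
  fix x assume x: "x \<in> {(s, u) \<in> P v. a \<le> s \<and> s \<le> b \<and> selects E \<alpha> enum v (N s) u f}"
  obtain s u where su: "x = (s, u)" by (cases x)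
  have h: "(s, u) \<in> P v" "a \<le> s" "s \<le> b" "selects E \<alpha> enum v (N s) u f" using x su by auto
  have "0 < u" "u \<le> 1"
    using selects_u[where E=E and v=v and enum=enum, OF Evfin[OF v] enum[OF v] h(4)] by auto
  then show "x \<in> P v \<inter> ({0..b} \<times> {0..1})" using h su a by auto
qed

lemma sel_fin:
  assumes v: "v \<in> V" and a: "0 \<le> a"
  shows "finite {(s, u) \<in> P v. a \<le> s \<and> s \<le> b \<and> selects E \<alpha> enum v (N s) u f}"
  by (rule finite_subset[OF sel_sub[OF v a] fin[OF v]])

lemma sel_fin':
  assumes v: "v \<in> V" and a: "0 \<le> a"
  shows "finite {(s, u) \<in> P v. a \<le> s \<and> s < b \<and> selects E \<alpha> enum v (N s) u f}"
  by (rule finite_subset[OF _ sel_fin[OF v a, of b N f]]) auto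

lemma Np_ge1: "f \<in> E \<Longrightarrow> Np t f \<ge> 1"
  using eq by simp

lemma card_sel_mono:
  assumes v: "v \<in> V" and t: "t \<le> t'"
  shows "card {(s, u) \<in> P v. 0 \<le> s \<and> s < t \<and> selects E \<alpha> enum v (Np s) u f}
       \<le> card {(s, u) \<in> P v. 0 \<le> s \<and> s \<le> t \<and> selects E \<alpha> enum v (Np s) u f}"
    "card {(s, u) \<in> P v. 0 \<le> s \<and> s \<le> t \<and> selects E \<alpha> enum v (Np s) u f}
       \<le> card {(s, u) \<in> P v. 0 \<le> s \<and> s \<le> t' \<and> selects E \<alpha> enum v (Np s) u f}"
    "card {(s, u) \<in> P v. 0 \<le> s \<and> s < t \<and> selects E \<alpha> enum v (Np s) u f}
       \<le> card {(s, u) \<in> P v. 0 \<le> s \<and> s < t' \<and> selects E \<alpha> enum v (Np s) u f}"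
  by (intro card_mono sel_fin sel_fin' v; use t in auto)+

lemma card_sel_mono2:
  assumes v: "v \<in> V" and t: "t < t'"
  shows "card {(s, u) \<in> P v. 0 \<le> s \<and> s \<le> t \<and> selects E \<alpha> enum v (Np s) u f}
       \<le> card {(s, u) \<in> P v. 0 \<le> s \<and> s < t' \<and> selects E \<alpha> enum v (Np s) u f}"
  by (intro card_mono sel_fin' v; use t in auto)

lemma Np_mono: "f \<in> E \<Longrightarrow> t \<le> t' \<Longrightarrow> Np t f \<le> Np t' f"
  using eq[of f] card_sel_mono(3) Esub[of f] by (auto intro!: sum_mono)

lemma Np_le_Nt: "f \<in> E \<Longrightarrow> Np t f \<le> Nt t f"
  unfolding Nt_def using eq[of f] card_sel_mono(1)[OF _ order.refl] Esub[of f] by (auto intro!: sum_mono)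

lemma Nt_le_Np: "f \<in> E \<Longrightarrow> t < t' \<Longrightarrow> Nt t f \<le> Np t' f"
  unfolding Nt_def using eq[of f] card_sel_mono2 Esub[of f] by (auto intro!: sum_mono)

end

lemma poisson_tail:
  fixes X :: "'w \<Rightarrow> nat" and l r m :: real
  assumes M: "prob_space M" and Xm: "X \<in> measurable M (count_space UNIV)"
    and dist: "\<And>k. measure M {\<omega>\<in>space M. X \<omega> = k} = l ^ k / fact k * exp (- l)"
    and l: "l \<ge> 0" and r: "r > 0"
    and Pr: "\<And>k. Q k \<Longrightarrow> r powr (real k - m) \<ge> 1"
  shows "measure M {\<omega>\<in>space M. Q (X \<omega>)} \<le> exp (l * (r - 1)) / r powr m"
proof -
  interpret prob_space M by (rule M)
  define A where "A k = {\<omega>\<in>space M. X \<omega> = k \<and> Q k}" for k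
  have Ameas: "range A \<subseteq> sets M"
  proof -
    have "A k \<in> sets M" for k
    proof (cases "Q k")
      case True
      have "{\<omega>\<in>space M. X \<omega> = k} \<in> sets M" using Xm by measurable
      then show ?thesis using True by (simp add: A_def)
    next
      case False then show ?thesis by (simp add: A_def)
    qed
    then show ?thesis by auto
  qed
  have disj: "disjoint_family A" by (auto simp: disjoint_family_on_def A_def)
  have U: "(\<Union>k. A k) = {\<omega>\<in>space M. Q (X \<omega>)}" by (auto simp: A_def)
  have s1: "(\<lambda>k. measure M (A k)) sums measure M {\<omega>\<in>space M. Q (X \<omega>)}"
    using finite_measure_UNION[OF Ameas disj] U by simp
  have mA: "measure M (A k) = (if Q k then l ^ k / fact k * exp (- l) else 0)" for k
    by (auto simp: A_def dist)
  have s2: "(\<lambda>k. (l*r) ^ k / fact k * (exp (- l) / r powr m)) sums (exp (l*r) * (exp (- l) / r powr m))"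
    using sums_mult2[OF exp_converges[of "l*r"], of "exp (- l) / r powr m"]
    by (simp add: divide_inverse mult_ac)
  have le: "measure M (A k) \<le> (l*r) ^ k / fact k * (exp (- l) / r powr m)" for k
  proof (cases "Q k")
    case True
    have "r powr (real k - m) = r ^ k / r powr m" using r
      by (simp add: powr_diff powr_realpow)
    then have 1: "1 \<le> r ^ k / r powr m" using Pr[OF True] by simp
    have "l ^ k / fact k * exp (- l) = (l ^ k / fact k * exp (- l)) * 1" by simp
    also have "\<dots> \<le> (l ^ k / fact k * exp (- l)) * (r ^ k / r powr m)"
      by (rule mult_left_mono[OF 1]) (use l in auto)
    also have "\<dots> = (l*r) ^ k / fact k * (exp (- l) / r powr m)"
      by (simp add: power_mult_distrib)
    finally show ?thesis using True mA by simp
  next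
    case False
    then show ?thesis using mA l r by simp
  qed
  have "measure M {\<omega>\<in>space M. Q (X \<omega>)} \<le> exp (l*r) * (exp (- l) / r powr m)"
    by (rule sums_le[OF _ s1 s2]) (use le in auto)
  also have "\<dots> = exp (l * (r - 1)) / r powr m"
    by (simp add: exp_add[symmetric] algebra_simps exp_diff)
  finally show ?thesis .
qed


lemma wbox_dom:
  assumes "0 \<le> c" "c \<le> d" "d \<le> 1"
  shows "wbox n c d \<in> ppp_domain" "measure lborel (wbox n c d) = (2 * real n + 1) * (d - c)"
proof -
  have le: "real n ^ 2 \<le> real (Suc n) ^ 2" by (simp add: power_mono)
  have s: "wbox n c d \<in> sets (lborel::(real\<times>real) measure)"
    unfolding wbox_def by (simp add: lborel_prod[symmetric])
  have "emeasure (lborel::(real\<times>real) measure) (wbox n c d) = emeasure (lborel \<Otimes>\<^sub>M lborel) (wbox n c d)"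
    by (simp add: lborel_prod)
  also have "\<dots> = emeasure lborel {real n ^ 2..<real (Suc n) ^ 2} * emeasure lborel {c<..d}"
    unfolding wbox_def by (rule lborel.emeasure_pair_measure_Times) auto
  also have "\<dots> = ennreal ((real (Suc n) ^ 2 - real n ^ 2)*(d-c))" using assms le by (simp add: ennreal_mult)
  also have "(real (Suc n) ^ 2 - real n ^ 2) = 2 * real n + 1" by (simp add: power2_eq_square algebra_simps)
  finally have e: "emeasure lborel (wbox n c d) = ennreal ((2 * real n + 1) * (d - c))" .
  show "measure lborel (wbox n c d) = (2 * real n + 1) * (d - c)"
    using e assms by (simp add: measure_def)
  have "0 \<le> real n ^ 2" by simp
  then have sub: "wbox n c d \<subseteq> {0..} \<times> {0..1}" using assms
    by (auto simp: wbox_def simp del: of_nat_Suc intro: order_trans[OF zero_le_power2[of "real n"]])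
  show "wbox n c d \<in> ppp_domain" unfolding ppp_domain_def using s sub e by simp
qed

lemma h_pos1: "0 < \<epsilon> \<Longrightarrow> 0 < (1+\<epsilon>) * ln (1+\<epsilon>) - (\<epsilon>::real)"
proof -
  assume e: "0 < \<epsilon>"
  have "ln (1/(1+\<epsilon>)) < 1/(1+\<epsilon>) - 1"
  proof -
    have "ln (1/(1+\<epsilon>)) \<le> 1/(1+\<epsilon>) - 1" using e by (intro ln_le_minus_one) auto
    moreover have "ln (1/(1+\<epsilon>)) \<noteq> 1/(1+\<epsilon>) - 1"
      using ln_eq_minus_one[of "1/(1+\<epsilon>)"] e by auto
    ultimately show ?thesis by linarith
  qed
  then have "- ln (1+\<epsilon>) < 1/(1+\<epsilon>) - 1" using e by (simp add: ln_div)
  then have "(1+\<epsilon>) * (- ln (1+\<epsilon>)) < (1+\<epsilon>) * (1/(1+\<epsilon>) - 1)"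
    by (rule mult_strict_left_mono) (use e in auto)
  moreover have "(1+\<epsilon>) * (1/(1+\<epsilon>) - 1) = - \<epsilon>" using e by (simp add: field_simps)
  ultimately show ?thesis by (simp add: algebra_simps)
qed

lemma h_pos2: "0 < \<epsilon> \<Longrightarrow> \<epsilon> < 1 \<Longrightarrow> 0 < \<epsilon> + (1-\<epsilon>) * ln (1-\<epsilon>::real)"
proof -
  assume e: "0 < \<epsilon>" "\<epsilon> < 1"
  have "ln (1/(1-\<epsilon>)) < 1/(1-\<epsilon>) - 1"
  proof -
    have "ln (1/(1-\<epsilon>)) \<le> 1/(1-\<epsilon>) - 1" using e by (intro ln_le_minus_one) auto
    moreover have "ln (1/(1-\<epsilon>)) \<noteq> 1/(1-\<epsilon>) - 1"
      using ln_eq_minus_one[of "1/(1-\<epsilon>)"] e by auto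
    ultimately show ?thesis by linarith
  qed
  then have "- ln (1-\<epsilon>) < 1/(1-\<epsilon>) - 1" using e by (simp add: ln_div)
  then have "(1-\<epsilon>) * (- ln (1-\<epsilon>)) < (1-\<epsilon>) * (1/(1-\<epsilon>) - 1)"
    by (rule mult_strict_left_mono) (use e in auto)
  moreover have "(1-\<epsilon>) * (1/(1-\<epsilon>) - 1) = \<epsilon>" using e by (simp add: field_simps)
  ultimately show ?thesis by (simp add: algebra_simps)
qed

lemma geom_summable:
  assumes "0 < a" shows "summable (\<lambda>n::nat. exp (- (real n * a)))"
proof -
  have "summable (\<lambda>n. exp (- a) ^ n)" using assms by (intro summable_geometric) auto
  then show ?thesis by (simp add: exp_of_nat_mult[symmetric])
qed

lemma ppp_facts:
  assumes "iid_ppp_family M V P" "v \<in> V" "A \<in> ppp_domain"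
  shows "prob_space M" "AE \<omega> in M. finite (P v \<omega> \<inter> A)"
    "(\<lambda>\<omega>. card (P v \<omega> \<inter> A)) \<in> measurable M (count_space UNIV)"
    "\<And>k. measure M {\<omega> \<in> space M. card (P v \<omega> \<inter> A) = k}
                 = (measure lborel A) ^ k / fact k * exp (- measure lborel A)"
  using assms unfolding iid_ppp_family_def by blast+

lemma window_lln:
  assumes ppp: "iid_ppp_family M V P" and v: "v \<in> V"
    and cd: "0 \<le> c" "c < d" "d \<le> 1" and e: "0 < \<epsilon>" "\<epsilon> < 1"
  shows "AE \<omega> in M. eventually (\<lambda>n.
     \<bar>real (card (P v \<omega> \<inter> wbox n c d)) - (2 * real n + 1) * (d - c)\<bar>
        < \<epsilon> * ((2 * real n + 1) * (d - c))) sequentially"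
proof -
  have dom: "wbox n c d \<in> ppp_domain" for n using wbox_dom cd by auto
  have M: "prob_space M" using ppp_facts(1)[OF ppp v dom] .
  interpret prob_space M by (rule M)
  define X where "X n \<omega> = card (P v \<omega> \<inter> wbox n c d)" for n \<omega>
  define l where "l n = (2 * real n + 1) * (d - c)" for n
  have Xm: "X n \<in> measurable M (count_space UNIV)" for n
    unfolding X_def by (rule ppp_facts(3)[OF ppp v dom])
  have dist: "measure M {\<omega>\<in>space M. X n \<omega> = k} = l n ^ k / fact k * exp (- l n)" for n k
  proof -
    have "measure lborel (wbox n c d) = l n" using wbox_dom(2)[of c d n] cd by (simp add: l_def)
    then show ?thesis using ppp_facts(4)[OF ppp v dom[of n]] unfolding X_def by simp
  qed
  have lpos: "l n \<ge> real n * (d - c)" "l n \<ge> 0" for n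
  proof -
    have "real n * (d - c) \<le> (2 * real n + 1) * (d - c)" using cd by (intro mult_right_mono) auto
    then show "l n \<ge> real n * (d - c)" by (simp add: l_def)
    show "l n \<ge> 0" using cd by (simp add: l_def)
  qed
  define h1 where "h1 = (1+\<epsilon>) * ln (1+\<epsilon>) - \<epsilon>"
  define h2 where "h2 = \<epsilon> + (1-\<epsilon>) * ln (1-\<epsilon>)"
  have h1: "h1 > 0" using h_pos1 e by (simp add: h1_def)
  have h2: "h2 > 0" using h_pos2 e by (simp add: h2_def)
  define A1 where "A1 n = {\<omega>\<in>space M. (1+\<epsilon>) * l n \<le> real (X n \<omega>)}" for n
  define A2 where "A2 n = {\<omega>\<in>space M. real (X n \<omega>) \<le> (1-\<epsilon>) * l n}" for n
  have A1m: "A1 n \<in> sets M" for n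
  proof -
    have "{\<omega>\<in>space M. (\<lambda>k. (1+\<epsilon>) * l n \<le> real k) (X n \<omega>)} \<in> sets M"
      using Xm[of n] by measurable
    then show ?thesis by (simp add: A1_def)
  qed
  have A2m: "A2 n \<in> sets M" for n
  proof -
    have "{\<omega>\<in>space M. (\<lambda>k. real k \<le> (1-\<epsilon>) * l n) (X n \<omega>)} \<in> sets M"
      using Xm[of n] by measurable
    then show ?thesis by (simp add: A2_def)
  qed
  have b1: "measure M (A1 n) \<le> exp (- (real n * ((d - c) * h1)))" for n
  proof -
    have "measure M (A1 n) \<le> exp (l n * ((1+\<epsilon>) - 1)) / (1+\<epsilon>) powr ((1+\<epsilon>) * l n)"
      unfolding A1_def
    proof (rule poisson_tail[OF M Xm dist lpos(2)])
      show "0 < 1+\<epsilon>" using e by simp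
      fix k assume "(1+\<epsilon>) * l n \<le> real k"
      then show "1 \<le> (1+\<epsilon>) powr (real k - (1+\<epsilon>) * l n)" using e by (intro ge_one_powr_ge_zero) auto
    qed
    also have "(1+\<epsilon>) powr ((1+\<epsilon>) * l n) = exp ((1+\<epsilon>) * l n * ln (1+\<epsilon>))"
      using e by (simp add: powr_def)
    also have "exp (l n * ((1+\<epsilon>) - 1)) / exp ((1+\<epsilon>) * l n * ln (1+\<epsilon>))
       = exp (l n * ((1+\<epsilon>) - 1) - (1+\<epsilon>) * l n * ln (1+\<epsilon>))" by (simp add: exp_diff)
    also have "l n * ((1+\<epsilon>) - 1) - (1+\<epsilon>) * l n * ln (1+\<epsilon>) = - (l n * h1)"
      by (simp add: h1_def algebra_simps)
    also have "exp (- (l n * h1)) \<le> exp (- (real n * ((d - c) * h1)))"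
      using mult_right_mono[OF lpos(1)[of n], of h1] h1 by (simp add: mult.assoc)
    finally show ?thesis .
  qed
  have b2: "measure M (A2 n) \<le> exp (- (real n * ((d - c) * h2)))" for n
  proof -
    have "measure M (A2 n) \<le> exp (l n * ((1-\<epsilon>) - 1)) / (1-\<epsilon>) powr ((1-\<epsilon>) * l n)"
      unfolding A2_def
    proof (rule poisson_tail[OF M Xm dist lpos(2)])
      show "0 < 1-\<epsilon>" using e by simp
      fix k assume "real k \<le> (1-\<epsilon>) * l n"
      then show "1 \<le> (1-\<epsilon>) powr (real k - (1-\<epsilon>) * l n)" using e
      proof -
        have y: "0 \<le> - (real k - (1-\<epsilon>) * l n)" using \<open>real k \<le> (1-\<epsilon>) * l n\<close> by simp
        have p: "(1-\<epsilon>) powr (- (real k - (1-\<epsilon>) * l n)) \<le> 1" by (rule powr_le1) (use e y in auto)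
        have q: "0 < (1-\<epsilon>) powr (- (real k - (1-\<epsilon>) * l n))" using e by simp
        have "(1-\<epsilon>) powr (real k - (1-\<epsilon>) * l n) = 1 / (1-\<epsilon>) powr (- (real k - (1-\<epsilon>) * l n))"
          using powr_minus[of "1-\<epsilon>" "- (real k - (1-\<epsilon>) * l n)"] by (simp add: divide_inverse)
        moreover have "1 \<le> 1 / (1-\<epsilon>) powr (- (real k - (1-\<epsilon>) * l n))"
          using p q le_divide_eq_1 by blast
        ultimately show ?thesis by argo
      qed
    qed
    also have "(1-\<epsilon>) powr ((1-\<epsilon>) * l n) = exp ((1-\<epsilon>) * l n * ln (1-\<epsilon>))"
      using e by (simp add: powr_def)
    also have "exp (l n * ((1-\<epsilon>) - 1)) / exp ((1-\<epsilon>) * l n * ln (1-\<epsilon>))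
       = exp (l n * ((1-\<epsilon>) - 1) - (1-\<epsilon>) * l n * ln (1-\<epsilon>))" by (simp add: exp_diff)
    also have "l n * ((1-\<epsilon>) - 1) - (1-\<epsilon>) * l n * ln (1-\<epsilon>) = - (l n * h2)"
      by (simp add: h2_def algebra_simps)
    also have "exp (- (l n * h2)) \<le> exp (- (real n * ((d - c) * h2)))"
      using mult_right_mono[OF lpos(1)[of n], of h2] h2 by (simp add: mult.assoc)
    finally show ?thesis .
  qed
  have s1: "summable (\<lambda>n. measure M (A1 n))"
    by (rule summable_comparison_test'[OF geom_summable[of "(d - c) * h1"]])
       (use cd h1 b1 in auto)
  have s2: "summable (\<lambda>n. measure M (A2 n))"
    by (rule summable_comparison_test'[OF geom_summable[of "(d - c) * h2"]])
       (use cd h2 b2 in auto)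
  have ae1: "AE \<omega> in M. eventually (\<lambda>n. \<omega> \<in> space M - A1 n) sequentially"
    by (rule borel_cantelli_AE1) (use A1m s1 in \<open>auto simp: emeasure_eq_measure\<close>)
  have ae2: "AE \<omega> in M. eventually (\<lambda>n. \<omega> \<in> space M - A2 n) sequentially"
    by (rule borel_cantelli_AE1) (use A2m s2 in \<open>auto simp: emeasure_eq_measure\<close>)
  show ?thesis
  proof (rule AE_mp[OF AE_conjI[OF ae1 ae2]], rule AE_I2, safe)
    fix \<omega> assume \<omega>: "\<omega> \<in> space M" and ev1: "eventually (\<lambda>n. \<omega> \<in> space M - A1 n) sequentially"
      and ev2: "eventually (\<lambda>n. \<omega> \<in> space M - A2 n) sequentially"
    show "eventually (\<lambda>n. \<bar>real (card (P v \<omega> \<inter> wbox n c d)) - (2 * real n + 1) * (d - c)\<bar>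
        < \<epsilon> * ((2 * real n + 1) * (d - c))) sequentially"
      using eventually_conj[OF ev1 ev2]
    proof eventually_elim
      case (elim n)
      then have "(1-\<epsilon>) * l n < real (X n \<omega>)" "real (X n \<omega>) < (1+\<epsilon>) * l n"
        using \<omega> by (auto simp: A1_def A2_def)
      then show ?case unfolding X_def l_def by (simp add: abs_less_iff algebra_simps)
    qed
  qed
qed


lemma wbox_mem: "(s, u) \<in> wbox n c d \<longleftrightarrow> real n ^ 2 \<le> s \<and> s < real (Suc n) ^ 2 \<and> c < u \<and> u \<le> d"
  by (simp add: wbox_def)

lemma nat_floor_le: "0 \<le> z \<Longrightarrow> real (nat \<lfloor>z\<rfloor>) \<le> z" "0 \<le> z \<Longrightarrow> z < real (nat \<lfloor>z\<rfloor>) + 1"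
  "real (nat \<lfloor>z\<rfloor>) > z - 1"
  by (auto simp: of_nat_nat) linarith+

lemma nat_ceil_le: "0 \<le> z \<Longrightarrow> z \<le> real (nat \<lceil>z\<rceil>)" "0 \<le> z \<Longrightarrow> real (nat \<lceil>z\<rceil>) < z + 1"
  by (auto simp: of_nat_nat) linarith+

context upath begin

lemma wbox_fin:
  assumes v: "v \<in> V" and "0 \<le> c" "d \<le> 1"
  shows "finite (P v \<inter> wbox n c d)"
proof (rule finite_subset[OF _ fin[OF v, of "real (Suc n) ^ 2"]])
  have "0 \<le> real n ^ 2" by simp
  then show "P v \<inter> wbox n c d \<subseteq> P v \<inter> ({0..real (Suc n) ^ 2} \<times> {0..1})"
    using assms by (auto simp: wbox_def simp del: of_nat_Suc intro: order_trans[OF zero_le_power2[of "real n"]])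
qed

lemma Np_incr:
  assumes f: "f \<in> E" and t: "real n ^ 2 \<le> t" "t \<le> real (Suc n) ^ 2"
  shows "Np t f \<le> Np (real n ^ 2) f + (\<Sum>w\<in>f. card (P w \<inter> wbox n 0 1))"
proof -
  have per: "card {(s, u) \<in> P w. 0 \<le> s \<and> s < t \<and> selects E \<alpha> enum w (Np s) u f}
     \<le> card {(s, u) \<in> P w. 0 \<le> s \<and> s < real n ^ 2 \<and> selects E \<alpha> enum w (Np s) u f}
       + card (P w \<inter> wbox n 0 1)" if w: "w \<in> f" for w
  proof -
    have wV: "w \<in> V" using Esub[OF f] w by auto
    have "{(s, u) \<in> P w. 0 \<le> s \<and> s < t \<and> selects E \<alpha> enum w (Np s) u f}
       \<subseteq> {(s, u) \<in> P w. 0 \<le> s \<and> s < real n ^ 2 \<and> selects E \<alpha> enum w (Np s) u f} \<union> (P w \<inter> wbox n 0 1)"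
    proof
      fix x assume x: "x \<in> {(s, u) \<in> P w. 0 \<le> s \<and> s < t \<and> selects E \<alpha> enum w (Np s) u f}"
      obtain s u where su: "x = (s, u)" by (cases x)
      have h: "(s, u) \<in> P w" "0 \<le> s" "s < t" "selects E \<alpha> enum w (Np s) u f" using x su by auto
      have "0 < u" "u \<le> 1"
        using selects_u[where E=E and v=w and enum=enum, OF Evfin[OF wV] enum[OF wV] h(4)] by auto
      then show "x \<in> {(s, u) \<in> P w. 0 \<le> s \<and> s < real n ^ 2 \<and> selects E \<alpha> enum w (Np s) u f} \<union> (P w \<inter> wbox n 0 1)"
        using h su t by (cases "s < real n ^ 2") (auto simp: wbox_mem)
    qed
    then have "card {(s, u) \<in> P w. 0 \<le> s \<and> s < t \<and> selects E \<alpha> enum w (Np s) u f}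
       \<le> card ({(s, u) \<in> P w. 0 \<le> s \<and> s < real n ^ 2 \<and> selects E \<alpha> enum w (Np s) u f} \<union> (P w \<inter> wbox n 0 1))"
      by (intro card_mono finite_UnI sel_fin' wbox_fin wV) auto
    also have "\<dots> \<le> card {(s, u) \<in> P w. 0 \<le> s \<and> s < real n ^ 2 \<and> selects E \<alpha> enum w (Np s) u f}
       + card (P w \<inter> wbox n 0 1)" by (rule card_Un_le)
    finally show ?thesis .
  qed
  have "Np t f = 1 + (\<Sum>w\<in>f. card {(s, u) \<in> P w. 0 \<le> s \<and> s < t \<and> selects E \<alpha> enum w (Np s) u f})"
    by (rule eq[OF f])
  also have "\<dots> \<le> 1 + (\<Sum>w\<in>f. card {(s, u) \<in> P w. 0 \<le> s \<and> s < real n ^ 2 \<and> selects E \<alpha> enum w (Np s) u f}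
       + card (P w \<inter> wbox n 0 1))"
    using per by (intro add_left_mono sum_mono) auto
  also have "\<dots> = Np (real n ^ 2) f + (\<Sum>w\<in>f. card (P w \<inter> wbox n 0 1))"
    by (simp add: eq[OF f] sum.distrib)
  finally show ?thesis .
qed

definition iv :: "'a \<Rightarrow> nat" where
  "iv v = (THE i. i < card (Ev E v) \<and> enum v i = e)"

lemma vV: "v \<in> e \<Longrightarrow> v \<in> V"
  using Esub[OF e] by auto

lemma e_in_Ev: "v \<in> e \<Longrightarrow> e \<in> Ev E v"
  using e by (simp add: Ev_def)

lemma iv: assumes v: "v \<in> e" shows "iv v < card (Ev E v)" "enum v (iv v) = e"
proof -
  have b: "bij_betw (enum v) {..<card (Ev E v)} (Ev E v)" using enum[OF vV[OF v]] .
  have "e \<in> enum v ` {..<card (Ev E v)}" using bij_betw_imp_surj_on[OF b] e_in_Ev[OF v] by simp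
  then obtain i where i: "i < card (Ev E v)" "enum v i = e" by auto
  have "\<exists>!i. i < card (Ev E v) \<and> enum v i = e"
    using i bij_betw_imp_inj_on[OF b] by (auto simp: inj_on_def)
  then have "iv v < card (Ev E v) \<and> enum v (iv v) = e" unfolding iv_def by (rule theI')
  then show "iv v < card (Ev E v)" "enum v (iv v) = e" by auto
qed

definition Av :: "'a \<Rightarrow> real \<Rightarrow> real" where
  "Av v s = (\<Sum>j<iv v. pol E \<alpha> v (Np s) (enum v j))"

definition pv :: "'a \<Rightarrow> real \<Rightarrow> real" where
  "pv v s = pol E \<alpha> v (Np s) e"

lemma sel_e: assumes v: "v \<in> e" shows "selects E \<alpha> enum v (Np s) u e \<longleftrightarrow> Av v s < u \<and> u \<le> Av v s + pv v s"
  unfolding Av_def pv_def using selects_iff[where E=E and v=v and enum=enum, OF enum[OF vV[OF v]] iv[OF v]] by blast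

lemma Av_nonneg: "Av v s \<ge> 0"
  unfolding Av_def by (intro sum_nonneg pol_nonneg)

lemma pv_nonneg: "pv v s \<ge> 0"
  unfolding pv_def by (rule pol_nonneg)

lemma Av_pv_le1: assumes v: "v \<in> e" shows "Av v s + pv v s \<le> 1"
proof -
  have "Av v s + pv v s = (\<Sum>j<Suc (iv v). pol E \<alpha> v (Np s) (enum v j))"
    using iv[OF v] by (simp add: Av_def pv_def)
  also have "\<dots> \<le> 1" using iv[OF v] sum_enum_le1[of E v enum "Suc (iv v)" \<alpha> "Np s"] Evfin[OF vV[OF v]] enum[OF vV[OF v]]
    by auto
  finally show ?thesis .
qed

definition Wv :: "'a \<Rightarrow> nat \<Rightarrow> nat" where
  "Wv v n = card {(s, u) \<in> P v. real n ^ 2 \<le> s \<and> s < real (Suc n) ^ 2 \<and> selects E \<alpha> enum v (Np s) u e}"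

lemma Wv_fin: "v \<in> V \<Longrightarrow> finite {(s, u) \<in> P v. real n ^ 2 \<le> s \<and> s < real (Suc n) ^ 2 \<and> selects E \<alpha> enum v (Np s) u e}"
  using sel_fin'[of v "real n ^ 2" "real (Suc n) ^ 2" Np e] by simp

end


lemma abs_bound: fixes c x d :: real
  shows "\<bar>c - x\<bar> < d * x \<Longrightarrow> c < (1 + d) * x \<and> (1 - d) * x < c"
  by (auto simp: abs_less_iff algebra_simps)

context upath begin

lemma window_bounds:
  fixes m :: nat and ql qu :: real
  assumes v: "v \<in> e" and m: "2 \<le> m"
    and pb: "\<And>s. real n ^ 2 \<le> s \<Longrightarrow> s < real (Suc n) ^ 2 \<Longrightarrow> ql \<le> pv v s \<and> pv v s \<le> qu"
    and ab: "\<And>s. real n ^ 2 \<le> s \<Longrightarrow> s < real (Suc n) ^ 2 \<Longrightarrow> \<bar>Av v s - Av v (real n ^ 2)\<bar> \<le> 1 / real m"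
    and lb: "\<And>k l. k < l \<Longrightarrow> l \<le> m \<Longrightarrow>
       \<bar>real (card (P v \<inter> wbox n (real k / real m) (real l / real m)))
            - (2 * real n + 1) * (real l / real m - real k / real m)\<bar>
        < (1 / real m) * ((2 * real n + 1) * (real l / real m - real k / real m))"
  shows "real (Wv v n) \<le> (1 + 1 / real m) * (2 * real n + 1) * (qu + 4 / real m)"
    and "(1 - 1 / real m) * (2 * real n + 1) * (ql - 4 / real m) \<le> real (Wv v n)"
proof -
  define S where "S = {(s, u) \<in> P v. real n ^ 2 \<le> s \<and> s < real (Suc n) ^ 2 \<and> selects E \<alpha> enum v (Np s) u e}"
  have Wv: "Wv v n = card S" by (simp add: Wv_def S_def)
  have vV': "v \<in> V" by (rule vV[OF v])
  have Sfin: "finite S" unfolding S_def by (rule Wv_fin[OF vV'])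
  define A0 where "A0 = Av v (real n ^ 2)"
  define \<eta> where "\<eta> = 1 / real m"
  have mpos: "real m \<ge> 2" using m by simp
  have \<eta>pos: "\<eta> > 0" using m by (simp add: \<eta>_def)
  have n0: "real n ^ 2 \<le> real n ^ 2" "real n ^ 2 < real (Suc n) ^ 2"
    by (auto intro: power_strict_mono)
  have qu0: "qu \<ge> 0" using pb[OF n0] pv_nonneg[of v] by (meson order_trans)
  have A0: "A0 \<ge> 0" "A0 + ql \<le> 1" using Av_nonneg Av_pv_le1[OF v] pb[OF n0] by (auto simp: A0_def) (smt (verit))
  have cnt_pos: "2 * real n + 1 > 0" by simp
  show "real (Wv v n) \<le> (1 + 1 / real m) * (2 * real n + 1) * (qu + 4 / real m)"
  proof -
    define x where "x = max 0 (A0 - \<eta>)"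
    define y where "y = min 1 (A0 + \<eta> + qu)"
    define k where "k = nat \<lfloor>real m * x\<rfloor>"
    define l where "l = nat \<lceil>real m * y\<rceil>"
    have x0: "x \<ge> 0" and y0: "y \<ge> 0" using A0 qu0 \<eta>pos by (auto simp: x_def y_def)
    have kx: "real k / real m \<le> x" using nat_floor_le(1)[of "real m * x"] x0 mpos
      by (simp add: k_def divide_simps mult.commute)
    have ly: "y \<le> real l / real m" using nat_ceil_le(1)[of "real m * y"] y0 mpos
      by (simp add: l_def divide_simps mult.commute)
    have kx2: "real k / real m > x - 1 / real m" using nat_floor_le(3)[of "real m * x"] mpos
      by (simp add: k_def divide_simps mult.commute)
    have ly2: "real l / real m < y + 1 / real m" using nat_ceil_le(2)[of "real m * y"] y0 mpos
      by (simp add: l_def divide_simps mult.commute)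
    have lm: "l \<le> m"
    proof -
      have my: "real m * y \<le> real m" using mpos by (simp add: y_def)
      then have "\<lceil>real m * y\<rceil> \<le> int m" using ceiling_le[of "real m * y" "int m"] by simp
      then show ?thesis using my by (simp add: l_def)
    qed
    have sub: "S \<subseteq> P v \<inter> wbox n (real k / real m) (real l / real m)"
    proof
      fix z assume z: "z \<in> S"
      obtain s u where su: "z = (s, u)" by (cases z)
      have h: "(s, u) \<in> P v" "real n ^ 2 \<le> s" "s < real (Suc n) ^ 2" "selects E \<alpha> enum v (Np s) u e"
        using z su by (auto simp: S_def)
      have u01: "0 < u" "u \<le> 1"
        using selects_u[where E=E and v=v and enum=enum, OF Evfin[OF vV'] enum[OF vV'] h(4)] by auto
      have sel: "Av v s < u" "u \<le> Av v s + pv v s" using sel_e[OF v] h(4) by auto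
      have "\<bar>Av v s - A0\<bar> \<le> \<eta>" using ab[OF h(2,3)] by (simp add: A0_def \<eta>_def)
      moreover have "pv v s \<le> qu" using pb[OF h(2,3)] by simp
      ultimately have "x < u" "u \<le> y" using sel u01 by (auto simp: x_def y_def)
      then show "z \<in> P v \<inter> wbox n (real k / real m) (real l / real m)"
        using kx ly h su by (auto simp: wbox_mem)
    qed
    show ?thesis
    proof (cases "k < l")
      case True
      have "real (Wv v n) \<le> real (card (P v \<inter> wbox n (real k / real m) (real l / real m)))"
        unfolding Wv using sub by (intro of_nat_mono card_mono wbox_fin vV') (use lm mpos in auto)
      also have "\<dots> < (1 + 1 / real m) * ((2 * real n + 1) * (real l / real m - real k / real m))"
        using abs_bound[OF lb[OF True lm]] by simp
      also have "\<dots> \<le> (1 + 1 / real m) * ((2 * real n + 1) * (qu + 4 / real m))"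
      proof -
        have "real l / real m - real k / real m \<le> qu + 4 / real m"
          using kx2 ly2 by (auto simp: x_def y_def \<eta>_def)
        then show ?thesis using mpos by (intro mult_left_mono) auto
      qed
      finally show ?thesis by (simp add: mult.assoc)
    next
      case False
      have "S = {}"
      proof -
        have "S \<subseteq> wbox n (real k / real m) (real l / real m)" using sub by auto
        moreover have "real l / real m \<le> real k / real m" using False mpos by (simp add: divide_right_mono)
        ultimately show ?thesis by (force simp: wbox_def)
      qed
      then show ?thesis using Wv qu0 mpos by simp
    qed
  qed
  show "(1 - 1 / real m) * (2 * real n + 1) * (ql - 4 / real m) \<le> real (Wv v n)"
  proof -
    define x where "x = A0 + \<eta>"
    define y where "y = A0 - \<eta> + ql"
    define k where "k = nat \<lceil>real m * x\<rceil>"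
    define l where "l = nat \<lfloor>real m * y\<rfloor>"
    have x0: "x \<ge> 0" using A0 \<eta>pos by (auto simp: x_def)
    have kx: "x \<le> real k / real m" using nat_ceil_le(1)[of "real m * x"] x0 mpos
      by (simp add: k_def divide_simps mult.commute)
    have kx2: "real k / real m < x + 1 / real m" using nat_ceil_le(2)[of "real m * x"] x0 mpos
      by (simp add: k_def divide_simps mult.commute)
    have ly2: "real l / real m > y - 1 / real m" using nat_floor_le(3)[of "real m * y"] mpos
      by (simp add: l_def divide_simps mult.commute)
    show ?thesis
    proof (cases "k < l")
      case True
      then have "0 < l" by simp
      then have my1: "1 \<le> real m * y" by (simp add: l_def)
      have y0: "y \<ge> 0"
      proof (rule ccontr)
        assume "\<not> y \<ge> 0"
        then have "real m * y \<le> 0" by (intro mult_nonneg_nonpos) auto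
        then show False using my1 by linarith
      qed
      have ly: "real l / real m \<le> y" using nat_floor_le(1)[of "real m * y"] y0 mpos
        by (simp add: l_def divide_simps mult.commute)
      have lm: "l \<le> m"
      proof -
        have "y \<le> 1" using A0 \<eta>pos by (simp add: y_def)
        then have "real m * y \<le> real m" using mpos by (simp add: mult_left_le)
        then have "\<lfloor>real m * y\<rfloor> \<le> int m" by linarith
        then show ?thesis by (simp add: l_def)
      qed
      have sub: "P v \<inter> wbox n (real k / real m) (real l / real m) \<subseteq> S"
      proof
        fix z assume z: "z \<in> P v \<inter> wbox n (real k / real m) (real l / real m)"
        obtain s u where su: "z = (s, u)" by (cases z)
        have h: "(s, u) \<in> P v" "real n ^ 2 \<le> s" "s < real (Suc n) ^ 2" "real k / real m < u" "u \<le> real l / real m"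
          using z su by (auto simp: wbox_mem)
        have "\<bar>Av v s - A0\<bar> \<le> \<eta>" using ab[OF h(2,3)] by (simp add: A0_def \<eta>_def)
        moreover have "ql \<le> pv v s" using pb[OF h(2,3)] by simp
        ultimately have "Av v s < u" "u \<le> Av v s + pv v s" using h(4,5) kx ly by (auto simp: x_def y_def)
        then have "selects E \<alpha> enum v (Np s) u e" using sel_e[OF v] by auto
        then show "z \<in> S" using h su by (auto simp: S_def)
      qed
      have "(1 - 1 / real m) * ((2 * real n + 1) * (ql - 4 / real m))
          \<le> (1 - 1 / real m) * ((2 * real n + 1) * (real l / real m - real k / real m))"
      proof -
        have "ql - 4 / real m \<le> real l / real m - real k / real m"
          using kx2 ly2 by (auto simp: x_def y_def \<eta>_def)
        moreover have "1 - 1 / real m \<ge> 0" using mpos by simp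
        ultimately show ?thesis using cnt_pos by (intro mult_left_mono) auto
      qed
      also have "\<dots> < real (card (P v \<inter> wbox n (real k / real m) (real l / real m)))"
        using abs_bound[OF lb[OF True lm]] by simp
      also have "\<dots> \<le> real (Wv v n)"
        unfolding Wv using sub Sfin by (intro of_nat_mono card_mono) auto
      finally show ?thesis by (simp add: mult.assoc)
    next
      case False
      have "ql - 4 / real m < 0"
      proof -
        have "real l \<le> real k" using False by simp
        then have "real l / real m \<le> real k / real m" using mpos by (simp add: divide_right_mono)
        then show ?thesis using kx2 ly2 by (auto simp: x_def y_def \<eta>_def)
      qed
      moreover have "1 - 1 / real m \<ge> 0" using mpos by simp
      ultimately have "(1 - 1 / real m) * (2 * real n + 1) * (ql - 4 / real m) \<le> 0"
        using cnt_pos by (simp add: mult_nonneg_nonpos)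
      then show ?thesis by simp
    qed
  qed
qed

end


lemma sum_odd_sq: "a \<le> b \<Longrightarrow> (\<Sum>n\<in>{a..<b}. 2 * real n + 1) = real b ^ 2 - real a ^ 2"
proof (induction b)
  case 0 then show ?case by simp
next
  case (Suc b)
  show ?case
  proof (cases "a \<le> b")
    case True
    then have "(\<Sum>n\<in>{a..<Suc b}. 2 * real n + 1) = (\<Sum>n\<in>{a..<b}. 2 * real n + 1) + (2 * real b + 1)"
      by simp
    also have "\<dots> = real (Suc b) ^ 2 - real a ^ 2" using Suc True by (simp add: power2_eq_square algebra_simps)
    finally show ?thesis .
  next
    case False
    then have "a = Suc b" using Suc by simp
    then show ?thesis by simp
  qed
qed

lemma sum_split_at:
  fixes w :: "nat \<Rightarrow> real"
  assumes "n0 \<le> M"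
  shows "(\<Sum>n<M. w n) = (\<Sum>n<n0. w n) + (\<Sum>n\<in>{n0..<M}. w n)"
proof -
  have "{..<M} = {..<n0} \<union> {n0..<M}" using assms by auto
  then show ?thesis by (simp add: sum.union_disjoint[of "{..<n0}" "{n0..<M}"] ivl_disj_int(2))
qed

lemma ratio_up:
  fixes f :: "real \<Rightarrow> real" and w :: "nat \<Rightarrow> real" and \<beta> \<delta> :: real
  assumes ev: "eventually (\<lambda>n. w n \<le> \<beta> * (2 * real n + 1)) sequentially" and \<beta>: "\<beta> \<ge> 0"
    and fb: "\<And>t. t \<ge> 0 \<Longrightarrow> f t \<le> 1 + (\<Sum>n<nat \<lfloor>sqrt t\<rfloor> + 1. w n)"
    and \<delta>: "\<delta> > 0"
  shows "eventually (\<lambda>t. f t / t \<le> \<beta> + \<delta>) at_top"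
proof -
  obtain n0 where n0: "\<And>n. n \<ge> n0 \<Longrightarrow> w n \<le> \<beta> * (2 * real n + 1)"
    using ev unfolding eventually_sequentially by blast
  define C0 where "C0 = (\<Sum>n<n0. w n)"
  have D: "(\<Sum>n<M. w n) \<le> \<bar>C0\<bar> + \<beta> * real M ^ 2" if M: "M \<ge> n0" for M
  proof -
    have "(\<Sum>n\<in>{n0..<M}. w n) \<le> (\<Sum>n\<in>{n0..<M}. \<beta> * (2 * real n + 1))"
      by (intro sum_mono n0) auto
    also have "\<dots> = \<beta> * (real M ^ 2 - real n0 ^ 2)" using M by (simp add: sum_distrib_left[symmetric] sum_odd_sq)
    also have "\<dots> \<le> \<beta> * real M ^ 2" using \<beta> by (simp add: mult_left_mono)
    finally show ?thesis using sum_split_at[OF M, of w] by (simp add: C0_def)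
  qed
  have lim: "((\<lambda>t::real. (1 + \<bar>C0\<bar> + \<beta> * (sqrt t + 1)^2) / t) \<longlongrightarrow> \<beta>) at_top"
    by real_asymp
  have ev1: "eventually (\<lambda>t. (1 + \<bar>C0\<bar> + \<beta> * (sqrt t + 1)^2) / t < \<beta> + \<delta>) at_top"
    using order_tendstoD(2)[OF lim] \<delta> by simp
  have ev2: "eventually (\<lambda>t::real. t \<ge> max 1 (real n0 ^ 2)) at_top" by (rule eventually_ge_at_top)
  show ?thesis using ev1 ev2
  proof eventually_elim
    case (elim t)
    have t1: "t \<ge> 1" using elim(2) by simp
    define M where "M = nat \<lfloor>sqrt t\<rfloor> + 1"
    have sq: "sqrt t \<ge> real n0" using elim(2) real_le_rsqrt by force
    have Mle: "real M \<le> sqrt t + 1" unfolding M_def using nat_floor_le(1)[of "sqrt t"] t1 by simp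
    have Mge: "real M > sqrt t" unfolding M_def using nat_floor_le(2)[of "sqrt t"] t1 by (simp add: add.commute)
    have Mn0: "M \<ge> n0" using Mge sq by linarith
    have "f t \<le> 1 + (\<Sum>n<M. w n)" using fb[of t] t1 by (simp add: M_def)
    also have "\<dots> \<le> 1 + \<bar>C0\<bar> + \<beta> * real M ^ 2" using D[OF Mn0] by simp
    also have "\<dots> \<le> 1 + \<bar>C0\<bar> + \<beta> * (sqrt t + 1) ^ 2"
      using Mle \<beta> by (intro add_left_mono mult_left_mono power_mono) auto
    finally have "f t / t \<le> (1 + \<bar>C0\<bar> + \<beta> * (sqrt t + 1) ^ 2) / t" using t1 by (simp add: divide_right_mono)
    then show ?case using elim(1) by linarith
  qed
qed

lemma ratio_low:
  fixes f :: "real \<Rightarrow> real" and w :: "nat \<Rightarrow> real" and \<beta> \<delta> :: real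
  assumes ev: "eventually (\<lambda>n. w n \<ge> \<beta> * (2 * real n + 1)) sequentially" and \<beta>: "\<beta> \<ge> 0"
    and w0: "\<And>n. w n \<ge> 0"
    and fb: "\<And>t. t \<ge> 0 \<Longrightarrow> f t \<ge> 1 + (\<Sum>n<nat \<lfloor>sqrt t\<rfloor>. w n)"
    and \<delta>: "\<delta> > 0"
  shows "eventually (\<lambda>t. f t / t \<ge> \<beta> - \<delta>) at_top"
proof -
  obtain n0 where n0: "\<And>n. n \<ge> n0 \<Longrightarrow> w n \<ge> \<beta> * (2 * real n + 1)"
    using ev unfolding eventually_sequentially by blast
  have D: "(\<Sum>n<M. w n) \<ge> \<beta> * real M ^ 2 - \<beta> * real n0 ^ 2" if M: "M \<ge> n0" for M
  proof -
    have "(\<Sum>n\<in>{n0..<M}. w n) \<ge> (\<Sum>n\<in>{n0..<M}. \<beta> * (2 * real n + 1))"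
      by (intro sum_mono n0) auto
    moreover have "(\<Sum>n\<in>{n0..<M}. \<beta> * (2 * real n + 1)) = \<beta> * (real M ^ 2 - real n0 ^ 2)"
      using M by (simp add: sum_distrib_left[symmetric] sum_odd_sq)
    moreover have "(\<Sum>n<n0. w n) \<ge> 0" by (intro sum_nonneg w0)
    ultimately show ?thesis using sum_split_at[OF M, of w] by (simp add: algebra_simps)
  qed
  have lim: "((\<lambda>t::real. \<beta> * (sqrt t - 1)^2 / t - \<beta> * real n0 ^ 2 / t) \<longlongrightarrow> \<beta>) at_top"
    by real_asymp
  have ev1: "eventually (\<lambda>t. \<beta> * (sqrt t - 1)^2 / t - \<beta> * real n0 ^ 2 / t > \<beta> - \<delta>) at_top"
    using order_tendstoD(1)[OF lim] \<delta> by simp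
  have ev2: "eventually (\<lambda>t::real. t \<ge> (real n0 + 1) ^ 2) at_top" by (rule eventually_ge_at_top)
  show ?thesis using ev1 ev2
  proof eventually_elim
    case (elim t)
    have "1 \<le> (real n0 + 1) ^ 2" by (rule one_le_power) simp
    then have t1: "t \<ge> 1" using elim(2) by linarith
    define M where "M = nat \<lfloor>sqrt t\<rfloor>"
    have sq: "sqrt t \<ge> real n0 + 1" using elim(2) real_le_rsqrt by force
    have Mge: "real M > sqrt t - 1" unfolding M_def using nat_floor_le(3)[of "sqrt t"] by simp
    have Mn0: "M \<ge> n0" using Mge sq by linarith
    have s1: "sqrt t - 1 \<ge> 0" using t1 by simp
    have "\<beta> * (sqrt t - 1) ^ 2 - \<beta> * real n0 ^ 2 \<le> \<beta> * real M ^ 2 - \<beta> * real n0 ^ 2"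
      using Mge s1 \<beta> by (intro diff_right_mono mult_left_mono power_mono) auto
    also have "\<dots> \<le> (\<Sum>n<M. w n)" by (rule D[OF Mn0])
    also have "\<dots> \<le> f t" using fb[of t] t1 by (simp add: M_def)
    finally have "(\<beta> * (sqrt t - 1) ^ 2 - \<beta> * real n0 ^ 2) / t \<le> f t / t" using t1 by (simp add: divide_right_mono)
    then show ?case using elim(1) by (simp add: diff_divide_distrib)
  qed
qed


context upath begin

lemma cum:
  assumes v: "v \<in> V"
  shows "card {(s, u) \<in> P v. 0 \<le> s \<and> s < real M ^ 2 \<and> selects E \<alpha> enum v (Np s) u e} = (\<Sum>n<M. Wv v n)"
proof (induction M)
  case 0
  have "{(s, u) \<in> P v. 0 \<le> s \<and> s < real 0 ^ 2 \<and> selects E \<alpha> enum v (Np s) u e} = {}" by auto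
  then show ?case by (metis card.empty lessThan_0 sum.empty)
next
  case (Suc M)
  have U: "{(s, u) \<in> P v. 0 \<le> s \<and> s < real (Suc M) ^ 2 \<and> selects E \<alpha> enum v (Np s) u e}
    = {(s, u) \<in> P v. 0 \<le> s \<and> s < real M ^ 2 \<and> selects E \<alpha> enum v (Np s) u e}
      \<union> {(s, u) \<in> P v. real M ^ 2 \<le> s \<and> s < real (Suc M) ^ 2 \<and> selects E \<alpha> enum v (Np s) u e}"
  proof -
    have a1: "real M ^ 2 \<le> real (Suc M) ^ 2" by (intro power_mono) auto
    have a2: "0 \<le> real M ^ 2" by simp
    show ?thesis by (auto simp del: of_nat_Suc dest: less_le_trans[OF _ a1] intro: order_trans[OF a2])
  qed
  have "card {(s, u) \<in> P v. 0 \<le> s \<and> s < real (Suc M) ^ 2 \<and> selects E \<alpha> enum v (Np s) u e}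
      = card {(s, u) \<in> P v. 0 \<le> s \<and> s < real M ^ 2 \<and> selects E \<alpha> enum v (Np s) u e}
        + card {(s, u) \<in> P v. real M ^ 2 \<le> s \<and> s < real (Suc M) ^ 2 \<and> selects E \<alpha> enum v (Np s) u e}"
    unfolding U by (intro card_Un_disjoint sel_fin' Wv_fin v) auto
  also have "\<dots> = (\<Sum>n<Suc M. Wv v n)" using Suc by (simp add: Wv_def)
  finally show ?case .
qed

lemma Nt_upper:
  assumes t: "t \<ge> 0"
  shows "real (Nt t e) \<le> 1 + (\<Sum>n<nat \<lfloor>sqrt t\<rfloor> + 1. (\<Sum>v\<in>e. real (Wv v n)))"
proof -
  define M where "M = nat \<lfloor>sqrt t\<rfloor> + 1"
  have "sqrt t < real M" unfolding M_def using nat_floor_le(2)[of "sqrt t"] t by (simp add: add.commute)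
  then have tM: "t < real M ^ 2" using t by (metis real_sqrt_less_iff real_sqrt_pow2 real_sqrt_power abs_of_nonneg of_nat_0_le_iff real_sqrt_abs2 real_less_rsqrt sqrt_le_D)
  have per: "card {(s, u) \<in> P v. 0 \<le> s \<and> s \<le> t \<and> selects E \<alpha> enum v (Np s) u e} \<le> (\<Sum>n<M. Wv v n)"
    if v: "v \<in> e" for v
  proof -
    have "card {(s, u) \<in> P v. 0 \<le> s \<and> s \<le> t \<and> selects E \<alpha> enum v (Np s) u e}
       \<le> card {(s, u) \<in> P v. 0 \<le> s \<and> s < real M ^ 2 \<and> selects E \<alpha> enum v (Np s) u e}"
      by (intro card_mono sel_fin' vV[OF v]) (use tM in auto)
    also have "\<dots> = (\<Sum>n<M. Wv v n)" by (rule cum[OF vV[OF v]])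
    finally show ?thesis .
  qed
  have "real (Nt t e) = 1 + (\<Sum>v\<in>e. real (card {(s, u) \<in> P v. 0 \<le> s \<and> s \<le> t \<and> selects E \<alpha> enum v (Np s) u e}))"
    by (simp add: Nt_def)
  also have "\<dots> \<le> 1 + (\<Sum>v\<in>e. (\<Sum>n<M. real (Wv v n)))"
    using per by (intro add_left_mono sum_mono) (simp add: of_nat_sum[symmetric] del: of_nat_sum)
  also have "\<dots> = 1 + (\<Sum>n<M. (\<Sum>v\<in>e. real (Wv v n)))" by (simp add: sum.swap[of _ e])
  finally show ?thesis by (simp add: M_def)
qed

lemma Nt_lower:
  assumes t: "t \<ge> 0"
  shows "real (Nt t e) \<ge> 1 + (\<Sum>n<nat \<lfloor>sqrt t\<rfloor>. (\<Sum>v\<in>e. real (Wv v n)))"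
proof -
  define M where "M = nat \<lfloor>sqrt t\<rfloor>"
  have "real M \<le> sqrt t" unfolding M_def using nat_floor_le(1)[of "sqrt t"] t by simp
  then have tM: "real M ^ 2 \<le> t" using t by (metis of_nat_0_le_iff power_mono real_sqrt_pow2)
  have per: "card {(s, u) \<in> P v. 0 \<le> s \<and> s \<le> t \<and> selects E \<alpha> enum v (Np s) u e} \<ge> (\<Sum>n<M. Wv v n)"
    if v: "v \<in> e" for v
  proof -
    have "(\<Sum>n<M. Wv v n) = card {(s, u) \<in> P v. 0 \<le> s \<and> s < real M ^ 2 \<and> selects E \<alpha> enum v (Np s) u e}"
      by (rule cum[OF vV[OF v], symmetric])
    also have "\<dots> \<le> card {(s, u) \<in> P v. 0 \<le> s \<and> s \<le> t \<and> selects E \<alpha> enum v (Np s) u e}"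
      by (intro card_mono sel_fin vV[OF v]) (use tM in auto)
    finally show ?thesis .
  qed
  have "1 + (\<Sum>n<M. (\<Sum>v\<in>e. real (Wv v n))) = 1 + (\<Sum>v\<in>e. (\<Sum>n<M. real (Wv v n)))"
    by (simp add: sum.swap[of _ e])
  also have "\<dots> \<le> 1 + (\<Sum>v\<in>e. real (card {(s, u) \<in> P v. 0 \<le> s \<and> s \<le> t \<and> selects E \<alpha> enum v (Np s) u e}))"
    using per by (intro add_left_mono sum_mono) (simp add: of_nat_sum[symmetric] del: of_nat_sum)
  also have "\<dots> = real (Nt t e)" by (simp add: Nt_def)
  finally show ?thesis by (simp add: M_def)
qed

end


lemma ev_window:
  assumes "eventually P (at_top :: real filter)"
  shows "eventually (\<lambda>n. \<forall>s. real n ^ 2 \<le> s \<longrightarrow> P s) sequentially"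
proof -
  obtain T where T: "\<And>s. s \<ge> T \<Longrightarrow> P s" using assms unfolding eventually_at_top_linorder by blast
  have "eventually (\<lambda>n. real n \<ge> max 1 T) sequentially"
    using filterlim_real_sequentially unfolding filterlim_at_top by blast
  then show ?thesis
  proof eventually_elim
    case (elim n)
    have "real n \<le> real n ^ 2" using elim by (simp add: power2_eq_square)
    show ?case
    proof (intro allI impI)
      fix s assume "real n ^ 2 \<le> s"
      then have "T \<le> s" using elim \<open>real n \<le> real n ^ 2\<close> by linarith
      then show "P s" by (rule T)
    qed
  qed
qed

lemma ev_sq:
  assumes "eventually P (at_top :: real filter)"
  shows "eventually (\<lambda>n. P (real n ^ 2)) sequentially"
  using ev_window[OF assms] by eventually_elim auto

context upath begin

lemma card_f: "f \<in> E \<Longrightarrow> card f = 2" using Esub by blast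

lemma Av_var:
  fixes m :: nat
  assumes v: "v \<in> e" and m: "2 \<le> m"
    and nb: "\<And>f. f \<in> Ev E v \<Longrightarrow> \<exists>b>0. eventually (\<lambda>s. b * s \<le> real (Np s f)) at_top"
  shows "eventually (\<lambda>n. \<forall>s. real n ^ 2 \<le> s \<and> s < real (Suc n) ^ 2 \<longrightarrow>
            \<bar>Av v s - Av v (real n ^ 2)\<bar> \<le> 1 / real m) sequentially"
proof -
  have vV': "v \<in> V" using vV[OF v] .
  define \<eta> where "\<eta> = 1 / real m"
  have \<eta>: "\<eta> \<ge> 0" by (simp add: \<eta>_def)
  have one: "eventually (\<lambda>n. \<forall>s. real n ^ 2 \<le> s \<and> s < real (Suc n) ^ 2 \<longrightarrow>
      1 \<le> Np (real n ^ 2) f \<and> Np (real n ^ 2) f \<le> Np s f \<and> real (Np s f) \<le> (1 + \<eta>) * real (Np (real n ^ 2) f)) sequentially"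
    if f: "f \<in> Ev E v" for f
  proof -
    have fE: "f \<in> E" using f by (simp add: Ev_def)
    obtain b where b: "b > 0" "eventually (\<lambda>s. b * s \<le> real (Np s f)) at_top" using nb[OF f] by blast
    have e1: "eventually (\<lambda>n. b * real n ^ 2 \<le> real (Np (real n ^ 2) f)) sequentially"
      using ev_sq[OF b(2)] by simp
    have e2: "eventually (\<lambda>n. \<forall>w\<in>f. real (card (P w \<inter> wbox n 0 1)) < 3 / 2 * (2 * real n + 1)) sequentially"
    proof (rule eventually_ball_finite)
      show "finite f" using fin_f[OF fE] .
      show "\<forall>w\<in>f. eventually (\<lambda>n. real (card (P w \<inter> wbox n 0 1)) < 3 / 2 * (2 * real n + 1)) sequentially"
      proof
        fix w assume w: "w \<in> f"
        have wV: "w \<in> V" using Esub[OF fE] w by auto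
        show "eventually (\<lambda>n. real (card (P w \<inter> wbox n 0 1)) < 3 / 2 * (2 * real n + 1)) sequentially"
        proof -
          have "eventually (\<lambda>n. \<bar>real (card (P w \<inter> wbox n (real 0 / real 2) (real 2 / real 2)))
            - (2 * real n + 1) * (real 2 / real 2 - real 0 / real 2)\<bar>
            < (1 / real 2) * ((2 * real n + 1) * (real 2 / real 2 - real 0 / real 2))) sequentially"
            by (rule lln[OF wV]) auto
          then show ?thesis
          proof eventually_elim
            case (elim n)
            then have "\<bar>real (card (P w \<inter> wbox n 0 1)) - (2 * real n + 1)\<bar> < 1 / 2 * (2 * real n + 1)"
              by simp
            from abs_bound[OF this] show ?case by simp
          qed
        qed
      qed
    qed
    have e3: "eventually (\<lambda>n. 3 * (2 * real n + 1) * real m \<le> b * real n ^ 2) sequentially"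
      using b(1) by real_asymp
    show ?thesis using e1 e2 e3
    proof eventually_elim
      case (elim n)
      show ?case
      proof (intro allI impI conjI)
        fix s assume s: "real n ^ 2 \<le> s \<and> s < real (Suc n) ^ 2"
        show "1 \<le> Np (real n ^ 2) f" by (rule Np_ge1[OF fE])
        show "Np (real n ^ 2) f \<le> Np s f" using s by (intro Np_mono fE) auto
        have "real (Np s f) \<le> real (Np (real n ^ 2) f) + (\<Sum>w\<in>f. real (card (P w \<inter> wbox n 0 1)))"
          using Np_incr[OF fE, of n s] s by (simp add: of_nat_sum[symmetric] del: of_nat_sum)
        also have "(\<Sum>w\<in>f. real (card (P w \<inter> wbox n 0 1))) \<le> (\<Sum>w\<in>f. 3 / 2 * (2 * real n + 1))"
          using elim(2) by (intro sum_mono) (auto intro: less_imp_le)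
        also have "\<dots> = 3 * (2 * real n + 1)" using card_f[OF fE] by simp
        also have "3 * (2 * real n + 1) \<le> \<eta> * real (Np (real n ^ 2) f)"
        proof -
          have "3 * (2 * real n + 1) \<le> b * real n ^ 2 / real m" using elim(3) m by (simp add: field_simps)
          also have "\<dots> \<le> real (Np (real n ^ 2) f) / real m" using elim(1) m by (simp add: divide_right_mono)
          finally show ?thesis by (simp add: \<eta>_def)
        qed
        finally show "real (Np s f) \<le> (1 + \<eta>) * real (Np (real n ^ 2) f)" by (simp add: algebra_simps)
      qed
    qed
  qed
  have all: "eventually (\<lambda>n. \<forall>f\<in>Ev E v. \<forall>s. real n ^ 2 \<le> s \<and> s < real (Suc n) ^ 2 \<longrightarrow>
      1 \<le> Np (real n ^ 2) f \<and> Np (real n ^ 2) f \<le> Np s f \<and> real (Np s f) \<le> (1 + \<eta>) * real (Np (real n ^ 2) f)) sequentially"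
    by (rule eventually_ball_finite[OF Evfin[OF vV']]) (use one in blast)
  show ?thesis using all
  proof eventually_elim
    case (elim n)
    show ?case
    proof (intro allI impI)
      fix s assume s: "real n ^ 2 \<le> s \<and> s < real (Suc n) ^ 2"
      have bnd: "\<And>f. f \<in> Ev E v \<Longrightarrow> 1 \<le> Np (real n ^ 2) f \<and> Np (real n ^ 2) f \<le> Np s f \<and> real (Np s f) \<le> (1 + \<eta>) * real (Np (real n ^ 2) f)"
        using elim s by blast
      have encl: "enum v j \<in> Ev E v" if "j < iv v" for j
        using bij_betwE[OF enum[OF vV']] iv(1)[OF v] that by auto
      have r1: "pol E \<alpha> v (Np s) (enum v j) \<le> (1 + \<eta>) * pol E \<alpha> v (Np (real n ^ 2)) (enum v j)"
        and r2: "pol E \<alpha> v (Np (real n ^ 2)) (enum v j) \<le> (1 + \<eta>) * pol E \<alpha> v (Np s) (enum v j)"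
        if "j < iv v" for j
        using pol_ratio[OF Evfin[OF vV'] encl[OF that] bnd \<eta> alpha] by auto
      have A1: "Av v s \<le> (1 + \<eta>) * Av v (real n ^ 2)"
        unfolding Av_def sum_distrib_left by (intro sum_mono r1) auto
      have A2: "Av v (real n ^ 2) \<le> (1 + \<eta>) * Av v s"
        unfolding Av_def sum_distrib_left by (intro sum_mono r2) auto
      have le1: "Av v s' \<le> 1" for s' using Av_pv_le1[OF v, of s'] pv_nonneg[of v s'] by linarith
      have "\<eta> * Av v (real n ^ 2) \<le> \<eta>" using le1 \<eta> by (simp add: mult_left_le)
      moreover have "\<eta> * Av v s \<le> \<eta>" using le1 \<eta> by (simp add: mult_left_le)
      ultimately show "\<bar>Av v s - Av v (real n ^ 2)\<bar> \<le> 1 / real m"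
        using A1 A2 by (simp add: \<eta>_def[symmetric] algebra_simps abs_le_iff)
    qed
  qed
qed

end


context upath begin

lemma pv_split:
  assumes v: "v \<in> e"
  shows "pv v s = pw (real (Np s e)) \<alpha> / (pw (real (Np s e)) \<alpha> + (\<Sum>f\<in>Ev E v - {e}. pw (real (Np s f)) \<alpha>))"
  unfolding pv_def pol_def using sum.remove[OF Evfin[OF vV[OF v]] e_in_Ev[OF v], of "\<lambda>f. pw (real (Np s f)) \<alpha>"]
  by simp

lemma pw_Np: "f \<in> E \<Longrightarrow> pw (real (Np s f)) \<alpha> = real (Np s f) powr \<alpha>"
  using Np_ge1[of f s] by (simp add: pw_def)

lemma Sother_nonneg: "(\<Sum>f\<in>Ev E v - {e}. pw (real (Np s f)) \<alpha>) \<ge> 0"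
  by (intro sum_nonneg pw_nonneg) auto

lemma pv_upper:
  assumes v: "v \<in> e" and K: "K > 0" and C: "C \<ge> 0"
    and h1: "eventually (\<lambda>s. real (Np s e) \<le> K * s) at_top"
    and h2: "eventually (\<lambda>s. C * s powr \<alpha> \<le> (\<Sum>f\<in>Ev E v - {e}. pw (real (Np s f)) \<alpha>)) at_top"
  shows "eventually (\<lambda>s. pv v s \<le> K powr \<alpha> / (K powr \<alpha> + C)) at_top"
  using h1 h2 eventually_gt_at_top[of 0]
proof eventually_elim
  case (elim s)
  let ?y = "pw (real (Np s e)) \<alpha>" and ?S = "\<Sum>f\<in>Ev E v - {e}. pw (real (Np s f)) \<alpha>"
  have y0: "0 \<le> ?y" by (rule pw_nonneg) simp
  have "?y = real (Np s e) powr \<alpha>" by (rule pw_Np[OF e])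
  also have "\<dots> \<le> (K * s) powr \<alpha>" using elim(1) Np_ge1[OF e, of s] alpha by (intro powr_mono2) auto
  also have "\<dots> = K powr \<alpha> * s powr \<alpha>" using K elim(3) by (simp add: powr_mult)
  finally have yle: "?y \<le> K powr \<alpha> * s powr \<alpha>" .
  have "pv v s = ?y / (?y + ?S)" by (rule pv_split[OF v])
  also have "\<dots> \<le> (K powr \<alpha> * s powr \<alpha>) / (K powr \<alpha> * s powr \<alpha> + C * s powr \<alpha>)"
    by (rule frac_le[OF y0 yle]) (use K elim C in auto)
  also have "\<dots> = K powr \<alpha> / (K powr \<alpha> + C)"
    using elim(3) by (simp add: distrib_right[symmetric])
  finally show ?case .
qed

lemma pv_lower:
  assumes v: "v \<in> e" and K: "K > 0" and C: "C \<ge> 0"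
    and h1: "eventually (\<lambda>s. K * s \<le> real (Np s e)) at_top"
    and h2: "eventually (\<lambda>s. (\<Sum>f\<in>Ev E v - {e}. pw (real (Np s f)) \<alpha>) \<le> C * s powr \<alpha>) at_top"
  shows "eventually (\<lambda>s. K powr \<alpha> / (K powr \<alpha> + C) \<le> pv v s) at_top"
  using h1 h2 eventually_gt_at_top[of 0]
proof eventually_elim
  case (elim s)
  let ?y = "pw (real (Np s e)) \<alpha>" and ?S = "\<Sum>f\<in>Ev E v - {e}. pw (real (Np s f)) \<alpha>"
  have "K powr \<alpha> * s powr \<alpha> = (K * s) powr \<alpha>" using K elim(3) by (simp add: powr_mult)
  also have "\<dots> \<le> real (Np s e) powr \<alpha>" using elim(1) K elim(3) alpha by (intro powr_mono2) auto
  also have "\<dots> = ?y" by (rule pw_Np[OF e, symmetric])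
  finally have yle: "K powr \<alpha> * s powr \<alpha> \<le> ?y" .
  have ypos: "0 < ?y" using Np_ge1[OF e, of s] by (simp add: pw_def)
  have "K powr \<alpha> / (K powr \<alpha> + C) = (K powr \<alpha> * s powr \<alpha>) / (K powr \<alpha> * s powr \<alpha> + C * s powr \<alpha>)"
    using elim(3) by (simp add: distrib_right[symmetric])
  also have "\<dots> \<le> ?y / (?y + ?S)"
    by (rule frac_le[OF _ yle ypos]) (use K elim Sother_nonneg in auto)
  also have "\<dots> = pv v s" by (rule pv_split[OF v, symmetric])
  finally show ?case .
qed

lemma grid_fin: "finite {(k, l). k < l \<and> l \<le> (m::nat)}"
  by (rule finite_subset[of _ "{..m} \<times> {..m}"]) auto

lemma Wv_ev:
  fixes m :: nat
  assumes v: "v \<in> e" and m: "2 \<le> m"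
    and nb: "\<And>f. f \<in> Ev E v \<Longrightarrow> \<exists>b>0. eventually (\<lambda>s. b * s \<le> real (Np s f)) at_top"
    and pb: "eventually (\<lambda>s. ql \<le> pv v s \<and> pv v s \<le> qu) at_top"
  shows "eventually (\<lambda>n. real (Wv v n) \<le> (1 + 1 / real m) * (2 * real n + 1) * (qu + 4 / real m) \<and>
           (1 - 1 / real m) * (2 * real n + 1) * (ql - 4 / real m) \<le> real (Wv v n)) sequentially"
proof -
  have e1: "eventually (\<lambda>n. \<forall>s. real n ^ 2 \<le> s \<longrightarrow> ql \<le> pv v s \<and> pv v s \<le> qu) sequentially"
    by (rule ev_window[OF pb])
  have e2: "eventually (\<lambda>n. \<forall>s. real n ^ 2 \<le> s \<and> s < real (Suc n) ^ 2 \<longrightarrow>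
            \<bar>Av v s - Av v (real n ^ 2)\<bar> \<le> 1 / real m) sequentially"
    by (rule Av_var[OF v m]) (use nb in blast)
  have e3: "eventually (\<lambda>n. \<forall>kl\<in>{(k, l). k < l \<and> l \<le> m}.
       \<bar>real (card (P v \<inter> wbox n (real (fst kl) / real m) (real (snd kl) / real m)))
            - (2 * real n + 1) * (real (snd kl) / real m - real (fst kl) / real m)\<bar>
        < (1 / real m) * ((2 * real n + 1) * (real (snd kl) / real m - real (fst kl) / real m))) sequentially"
    by (rule eventually_ball_finite[OF grid_fin]) (use lln[OF vV[OF v] _ _ m] in auto)
  show ?thesis using e1 e2 e3
  proof eventually_elim
    case (elim n)
    have lb: "\<bar>real (card (P v \<inter> wbox n (real k / real m) (real l / real m)))
            - (2 * real n + 1) * (real l / real m - real k / real m)\<bar>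
        < (1 / real m) * ((2 * real n + 1) * (real l / real m - real k / real m))"
      if "k < l" "l \<le> m" for k l using elim(3) that by auto
    have pb': "ql \<le> pv v s \<and> pv v s \<le> qu" if "real n ^ 2 \<le> s" "s < real (Suc n) ^ 2" for s
      using elim(1) that by auto
    have ab: "\<bar>Av v s - Av v (real n ^ 2)\<bar> \<le> 1 / real m" if "real n ^ 2 \<le> s" "s < real (Suc n) ^ 2" for s
      using elim(2) that by auto
    show ?case using window_bounds[OF v m pb' ab lb] by auto
  qed
qed

end


context upath begin

lemma pv_le1: "v \<in> e \<Longrightarrow> pv v s \<le> 1"
  using Av_pv_le1[of v s] Av_nonneg[of v s] by linarith

lemma fin_e: "finite e" by (rule fin_f[OF e])

lemma Limsup_Nt:
  fixes m :: nat and qu :: "'a \<Rightarrow> real"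
  assumes m: "2 \<le> m"
    and nb: "\<And>v f. v \<in> e \<Longrightarrow> f \<in> Ev E v \<Longrightarrow> \<exists>b>0. eventually (\<lambda>s. b * s \<le> real (Np s f)) at_top"
    and pu: "\<And>v. v \<in> e \<Longrightarrow> eventually (\<lambda>s. pv v s \<le> qu v) at_top"
  shows "Limsup at_top (\<lambda>t. ereal (real (Nt t e) / t)) \<le> ereal (\<Sum>v\<in>e. (1 + 1 / real m) * (qu v + 4 / real m))"
proof -
  define \<beta> where "\<beta> = (\<Sum>v\<in>e. (1 + 1 / real m) * (qu v + 4 / real m))"
  have qu0: "qu v \<ge> 0" if v: "v \<in> e" for v
  proof -
    obtain s where "pv v s \<le> qu v" using eventually_happens[OF pu[OF v]] by auto
    then show ?thesis using pv_nonneg[of v s] by linarith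
  qed
  have \<beta>0: "\<beta> \<ge> 0" unfolding \<beta>_def using qu0 by (intro sum_nonneg) auto
  have ev: "eventually (\<lambda>n. \<forall>v\<in>e. real (Wv v n) \<le> (1 + 1 / real m) * (2 * real n + 1) * (qu v + 4 / real m)) sequentially"
  proof (rule eventually_ball_finite[OF fin_e], intro ballI)
    fix v assume v: "v \<in> e"
    have pb: "eventually (\<lambda>s. 0 \<le> pv v s \<and> pv v s \<le> qu v) at_top"
      using pu[OF v] by eventually_elim (simp add: pv_nonneg)
    show "eventually (\<lambda>n. real (Wv v n) \<le> (1 + 1 / real m) * (2 * real n + 1) * (qu v + 4 / real m)) sequentially"
      using Wv_ev[OF v m _ pb] nb[OF v] by (auto elim: eventually_mono)
  qed
  have ev': "eventually (\<lambda>n. (\<Sum>v\<in>e. real (Wv v n)) \<le> \<beta> * (2 * real n + 1)) sequentially"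
    using ev
  proof eventually_elim
    case (elim n)
    have "(\<Sum>v\<in>e. real (Wv v n)) \<le> (\<Sum>v\<in>e. (1 + 1 / real m) * (2 * real n + 1) * (qu v + 4 / real m))"
      using elim by (intro sum_mono) auto
    also have "\<dots> = \<beta> * (2 * real n + 1)" unfolding \<beta>_def sum_distrib_right by (intro sum.cong) auto
    finally show ?case .
  qed
  have Lb: "Limsup at_top (\<lambda>t. ereal (real (Nt t e) / t)) \<le> ereal \<beta> + ereal \<delta>" if \<delta>: "\<delta> > 0" for \<delta>
  proof -
    have "eventually (\<lambda>t. real (Nt t e) / t \<le> \<beta> + \<delta>) at_top"
      by (rule ratio_up[OF ev' \<beta>0 _ \<delta>]) (rule Nt_upper)
    then have "eventually (\<lambda>t. ereal (real (Nt t e) / t) \<le> ereal \<beta> + ereal \<delta>) at_top"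
      by eventually_elim simp
    then show ?thesis by (rule Limsup_bounded)
  qed
  show ?thesis unfolding \<beta>_def[symmetric] by (rule ereal_le_epsilon2) (rule Lb)
qed

lemma Liminf_Nt:
  fixes m :: nat and ql :: "'a \<Rightarrow> real"
  assumes m: "2 \<le> m"
    and nb: "\<And>v f. v \<in> e \<Longrightarrow> f \<in> Ev E v \<Longrightarrow> \<exists>b>0. eventually (\<lambda>s. b * s \<le> real (Np s f)) at_top"
    and pl: "\<And>v. v \<in> e \<Longrightarrow> eventually (\<lambda>s. ql v \<le> pv v s) at_top"
  shows "ereal (\<Sum>v\<in>e. (1 - 1 / real m) * (ql v - 4 / real m)) \<le> Liminf at_top (\<lambda>t. ereal (real (Nt t e) / t))"
proof -
  define \<beta> where "\<beta> = (\<Sum>v\<in>e. (1 - 1 / real m) * (ql v - 4 / real m))"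
  have nn: "eventually (\<lambda>t. ereal 0 \<le> ereal (real (Nt t e) / t)) at_top"
    using eventually_gt_at_top[of "0::real"] by eventually_elim simp
  show ?thesis
  proof (cases "\<beta> \<le> 0")
    case True
    have "ereal \<beta> \<le> ereal 0" using True by simp
    also have "\<dots> \<le> Liminf at_top (\<lambda>t. ereal (real (Nt t e) / t))" by (rule Liminf_bounded[OF nn])
    finally show ?thesis by (simp add: \<beta>_def)
  next
    case False
    then have \<beta>0: "\<beta> \<ge> 0" by simp
    have ev: "eventually (\<lambda>n. \<forall>v\<in>e. (1 - 1 / real m) * (2 * real n + 1) * (ql v - 4 / real m) \<le> real (Wv v n)) sequentially"
    proof (rule eventually_ball_finite[OF fin_e], intro ballI)
      fix v assume v: "v \<in> e"
      have pb: "eventually (\<lambda>s. ql v \<le> pv v s \<and> pv v s \<le> 1) at_top"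
        using pl[OF v] by eventually_elim (simp add: pv_le1[OF v])
      show "eventually (\<lambda>n. (1 - 1 / real m) * (2 * real n + 1) * (ql v - 4 / real m) \<le> real (Wv v n)) sequentially"
        using Wv_ev[OF v m _ pb] nb[OF v] by (auto elim: eventually_mono)
    qed
    have ev': "eventually (\<lambda>n. \<beta> * (2 * real n + 1) \<le> (\<Sum>v\<in>e. real (Wv v n))) sequentially"
      using ev
    proof eventually_elim
      case (elim n)
      have "\<beta> * (2 * real n + 1) = (\<Sum>v\<in>e. (1 - 1 / real m) * (2 * real n + 1) * (ql v - 4 / real m))"
        unfolding \<beta>_def sum_distrib_right by (intro sum.cong) auto
      also have "\<dots> \<le> (\<Sum>v\<in>e. real (Wv v n))" using elim by (intro sum_mono) auto
      finally show ?case .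
    qed
    have Lb: "ereal \<beta> \<le> Liminf at_top (\<lambda>t. ereal (real (Nt t e) / t)) + ereal \<delta>" if \<delta>: "\<delta> > 0" for \<delta>
    proof -
      have "eventually (\<lambda>t. real (Nt t e) / t \<ge> \<beta> - \<delta>) at_top"
        by (rule ratio_low[OF ev' \<beta>0 _ _ \<delta>]) (auto intro: sum_nonneg Nt_lower)
      then have "eventually (\<lambda>t. ereal (\<beta> - \<delta>) \<le> ereal (real (Nt t e) / t)) at_top"
        by eventually_elim simp
      then have "ereal (\<beta> - \<delta>) \<le> Liminf at_top (\<lambda>t. ereal (real (Nt t e) / t))" by (rule Liminf_bounded)
      then have "ereal (\<beta> - \<delta>) + ereal \<delta> \<le> Liminf at_top (\<lambda>t. ereal (real (Nt t e) / t)) + ereal \<delta>"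
        by (rule add_right_mono)
      then show ?thesis by simp
    qed
    show ?thesis unfolding \<beta>_def[symmetric] by (rule ereal_le_epsilon2) (rule Lb)
  qed
qed

end


lemma frac_max:
  fixes \<tau> a S :: real assumes t: "\<tau> > 0" and a: "a > 0" and S: "S \<ge> 0"
  shows "\<tau> * a / (\<tau> * a + S) \<le> max 1 \<tau> * (a / (a + S))"
    and "min 1 \<tau> * (a / (a + S)) \<le> \<tau> * a / (\<tau> * a + S)"
proof -
  show "\<tau> * a / (\<tau> * a + S) \<le> max 1 \<tau> * (a / (a + S))"
  proof (cases "\<tau> \<le> 1")
    case True
    have "\<tau> * a / (\<tau> * a + S) \<le> a / (a + S)" by (rule frac_le) (use t a S True in \<open>auto simp: mult_left_le_one_le\<close>)
    then show ?thesis using True by simp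
  next
    case False
    have "\<tau> * a / (\<tau> * a + S) \<le> \<tau> * a / (a + S)"
    proof -
      have p: "a + S > 0" "\<tau> * a + S > 0" using t a S by (auto intro: add_pos_nonneg)
      show ?thesis by (rule divide_left_mono) (use t a S False p in \<open>auto simp: mult_le_cancel_right1\<close>)
    qed
    then show ?thesis using False by simp
  qed
  show "min 1 \<tau> * (a / (a + S)) \<le> \<tau> * a / (\<tau> * a + S)"
  proof (cases "\<tau> \<ge> 1")
    case True
    have "a / (a + S) \<le> \<tau> * a / (\<tau> * a + S)" by (rule frac_le) (use t a S True in auto)
    then show ?thesis using True by simp
  next
    case False
    have "\<tau> * a / (a + S) \<le> \<tau> * a / (\<tau> * a + S)"
    proof -
      have p: "a + S > 0" "\<tau> * a + S > 0" using t a S by (auto intro: add_pos_nonneg)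
      show ?thesis by (rule divide_left_mono) (use t a S False p in \<open>auto simp: mult_le_cancel_right1\<close>)
    qed
    then show ?thesis using False by simp
  qed
qed

lemma upper_final:
  fixes x \<rho> \<alpha> :: real
  assumes x: "x > 0" and r: "\<rho> > 1" and a: "0 \<le> \<alpha>" "\<alpha> \<le> 1/2"
    and h: "x \<le> max 1 (x powr \<alpha> * \<rho> powr \<alpha>)"
  shows "x \<le> \<rho> powr (2 * \<alpha>)"
proof (cases "x \<le> 1")
  case True
  moreover have "1 \<le> \<rho> powr (2 * \<alpha>)" using r a by (intro ge_one_powr_ge_zero) auto
  ultimately show ?thesis by linarith
next
  case False
  then have h2: "x \<le> x powr \<alpha> * \<rho> powr \<alpha>" using h by (simp add: max_def split: if_splits)
  have xa: "x powr \<alpha> > 0" using x by simp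
  have "x powr \<alpha> * x powr (1 - \<alpha>) = x" using x by (simp add: powr_add[symmetric])
  then have "x powr \<alpha> * x powr (1 - \<alpha>) \<le> x powr \<alpha> * \<rho> powr \<alpha>" using h2 by simp
  then have h3: "x powr (1 - \<alpha>) \<le> \<rho> powr \<alpha>" using xa by simp
  have "x = (x powr (1 - \<alpha>)) powr (1 / (1 - \<alpha>))" using x a by (simp add: powr_powr)
  also have "\<dots> \<le> (\<rho> powr \<alpha>) powr (1 / (1 - \<alpha>))" using h3 a by (intro powr_mono2) auto
  also have "\<dots> = \<rho> powr (\<alpha> / (1 - \<alpha>))" by (simp add: powr_powr)
  also have "\<dots> \<le> \<rho> powr (2 * \<alpha>)"
  proof (rule powr_mono)
    have "\<alpha> \<le> 2 * \<alpha> * (1 - \<alpha>)" using a mult_left_le[of "\<alpha> * 2" \<alpha>] by (simp add: algebra_simps)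
    then show "\<alpha> / (1 - \<alpha>) \<le> 2 * \<alpha>" using a by (simp add: divide_simps)
  qed (use r in auto)
  finally show ?thesis .
qed

lemma lower_final:
  fixes x \<rho> \<alpha> :: real
  assumes x: "x > 0" and r: "\<rho> > 1" and a: "0 \<le> \<alpha>" "\<alpha> \<le> 1/2"
    and h: "min 1 (x powr \<alpha> * \<rho> powr (- \<alpha>)) \<le> x"
  shows "\<rho> powr (- 2 * \<alpha>) \<le> x"
proof (cases "x \<ge> 1")
  case True
  moreover have "\<rho> powr (- 2 * \<alpha>) \<le> 1"
  proof -
    have g: "1 \<le> \<rho> powr (2 * \<alpha>)" using r a by (intro ge_one_powr_ge_zero) auto
    have "\<rho> powr (- 2 * \<alpha>) = inverse (\<rho> powr (2 * \<alpha>))" using powr_minus[of \<rho> "2 * \<alpha>"] by simp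
    then show ?thesis using g by (simp add: inverse_le_1_iff)
  qed
  ultimately show ?thesis by linarith
next
  case False
  then have h2: "x powr \<alpha> * \<rho> powr (- \<alpha>) \<le> x" using h by (simp add: min_def split: if_splits)
  have xa: "x powr \<alpha> > 0" using x by simp
  have "x powr \<alpha> * x powr (1 - \<alpha>) = x" using x by (simp add: powr_add[symmetric])
  then have "x powr \<alpha> * \<rho> powr (- \<alpha>) \<le> x powr \<alpha> * x powr (1 - \<alpha>)" using h2 by simp
  then have h3: "\<rho> powr (- \<alpha>) \<le> x powr (1 - \<alpha>)" using xa by simp
  have "\<rho> powr (- 2 * \<alpha>) \<le> \<rho> powr (- \<alpha> / (1 - \<alpha>))"
  proof (rule powr_mono)
    have "\<alpha> \<le> 2 * \<alpha> * (1 - \<alpha>)" using a mult_left_le[of "\<alpha> * 2" \<alpha>] by (simp add: algebra_simps)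
    then show "- 2 * \<alpha> \<le> - \<alpha> / (1 - \<alpha>)" using a by (simp add: divide_simps)
  qed (use r in auto)
  also have "\<dots> = (\<rho> powr (- \<alpha>)) powr (1 / (1 - \<alpha>))" by (simp add: powr_powr)
  also have "\<dots> \<le> (x powr (1 - \<alpha>)) powr (1 / (1 - \<alpha>))" using h3 a r by (intro powr_mono2) auto
  also have "\<dots> = x" using x a by (simp add: powr_powr)
  finally show ?thesis .
qed


context upath begin

abbreviation X :: "'a set \<Rightarrow> real \<Rightarrow> ereal" where
  "X f \<equiv> (\<lambda>t. ereal (real (Nt t f) / t))"

lemma np_lower:
  assumes f: "f \<in> E" and b: "0 < b'" "b' < b" and L: "ereal b < Liminf at_top (X f)"
  shows "eventually (\<lambda>s. b' * s \<le> real (Np s f)) at_top"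
proof -
  have "eventually (\<lambda>t. ereal b < X f t) at_top" by (rule less_LiminfD[OF L])
  then obtain T where T: "\<And>t. t \<ge> T \<Longrightarrow> b < real (Nt t f) / t"
    unfolding eventually_at_top_linorder by auto
  show ?thesis unfolding eventually_at_top_linorder
  proof (intro exI[of _ "max (T + 1) (b / (b - b') + 1)"] allI impI)
    fix s assume s: "s \<ge> max (T + 1) (b / (b - b') + 1)"
    have bb: "b - b' > 0" using b by simp
    have q: "b / (b - b') > 0" using b bb by simp
    have t1: "s - 1 \<ge> T" "s - 1 > 0" using s q by auto
    have "b < real (Nt (s - 1) f) / (s - 1)" using T[OF t1(1)] .
    then have "b * (s - 1) < real (Nt (s - 1) f)" using t1(2) by (simp add: field_simps)
    also have "\<dots> \<le> real (Np s f)" using Nt_le_Np[OF f, of "s - 1" s] by simp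
    finally have 1: "b * (s - 1) < real (Np s f)" .
    have "b \<le> (b - b') * s"
    proof -
      have "b / (b - b') \<le> s" using s by simp
      then show ?thesis using bb by (simp add: divide_le_eq mult.commute)
    qed
    then have "b' * s \<le> b * (s - 1)" by (simp add: algebra_simps)
    then show "b' * s \<le> real (Np s f)" using 1 by linarith
  qed
qed

lemma np_upper:
  assumes f: "f \<in> E" and L: "Limsup at_top (X f) < ereal B"
  shows "eventually (\<lambda>s. real (Np s f) \<le> B * s) at_top"
proof -
  have "eventually (\<lambda>t. X f t < ereal B) at_top" by (rule Limsup_lessD[OF L])
  then show ?thesis using eventually_gt_at_top[of "0::real"]
  proof eventually_elim
    case (elim s)
    then have "real (Nt s f) < B * s" by (simp add: field_simps)
    moreover have "Np s f \<le> Nt s f" by (rule Np_le_Nt[OF f])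
    ultimately show ?case by linarith
  qed
qed

end

locale upath_mu = upath +
  fixes \<mu> :: "'a set \<Rightarrow> real" and \<rho> :: real
  assumes equil: "equilibrium E \<alpha> \<mu>" and nonvan: "\<And>f. f \<in> E \<Longrightarrow> \<mu> f > 0"
    and rho: "\<rho> > 1" and ahalf: "\<alpha> \<le> 1/2"
    and Li_lb: "\<And>f. f \<in> Ee E e \<Longrightarrow> ereal (\<mu> f / \<rho>) \<le> Liminf at_top (X f)"
    and Ls_ub: "\<And>f. f \<in> Ee E e \<Longrightarrow> Limsup at_top (X f) \<le> ereal (\<rho> * \<mu> f)"
begin

definition a0 where "a0 = \<mu> e powr \<alpha>"
definition Sv where "Sv v = (\<Sum>f\<in>Ev E v - {e}. \<mu> f powr \<alpha>)"

lemma Ev_Ee: "v \<in> e \<Longrightarrow> f \<in> Ev E v \<Longrightarrow> f \<in> Ee E e"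
  by (auto simp: Ev_def Ee_def)

lemma Ev_E: "f \<in> Ev E v \<Longrightarrow> f \<in> E" by (simp add: Ev_def)

lemma a0_pos: "a0 > 0" using nonvan[OF e] by (simp add: a0_def)

lemma Sv_nonneg: "Sv v \<ge> 0" unfolding Sv_def by (intro sum_nonneg) auto

lemma equil_e: "\<mu> e = (\<Sum>v\<in>e. a0 / (a0 + Sv v))"
proof -
  have "\<mu> e = (\<Sum>v\<in>e. pw (\<mu> e) \<alpha> / (\<Sum>e'\<in>Ev E v. pw (\<mu> e') \<alpha>))"
    using equil nonvan[OF e] e unfolding equilibrium_def by blast
  also have "\<dots> = (\<Sum>v\<in>e. a0 / (a0 + Sv v))"
  proof (rule sum.cong[OF refl])
    fix v assume v: "v \<in> e"
    have "(\<Sum>e'\<in>Ev E v. pw (\<mu> e') \<alpha>) = (\<Sum>e'\<in>Ev E v. \<mu> e' powr \<alpha>)"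
    proof (rule sum.cong[OF refl])
      fix f assume "f \<in> Ev E v"
      then have "\<mu> f > 0" using nonvan by (simp add: Ev_def)
      then show "pw (\<mu> f) \<alpha> = \<mu> f powr \<alpha>" by (simp add: pw_def)
    qed
    also have "\<dots> = a0 + Sv v"
      unfolding a0_def Sv_def using sum.remove[OF Evfin[OF vV[OF v]] e_in_Ev[OF v], of "\<lambda>f. \<mu> f powr \<alpha>"] by simp
    finally show "pw (\<mu> e) \<alpha> / (\<Sum>e'\<in>Ev E v. pw (\<mu> e') \<alpha>) = a0 / (a0 + Sv v)"
      using nonvan[OF e] by (simp add: pw_def a0_def)
  qed
  finally show ?thesis .
qed

lemma e_Ee: "e \<in> Ee E e"
proof -
  have "card e = 2" using card_f[OF e] .
  then have "e \<noteq> {}" by auto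
  then show ?thesis using e by (auto simp: Ee_def)
qed

lemma nb: "v \<in> e \<Longrightarrow> f \<in> Ev E v \<Longrightarrow> \<exists>b>0. eventually (\<lambda>s. b * s \<le> real (Np s f)) at_top"
proof -
  assume v: "v \<in> e" and f: "f \<in> Ev E v"
  have fE: "f \<in> E" by (rule Ev_E[OF f])
  have mu: "\<mu> f > 0" by (rule nonvan[OF fE])
  have "ereal (\<mu> f / (2 * \<rho>)) < ereal (\<mu> f / \<rho>)" using mu rho by (simp add: divide_strict_left_mono)
  also have "\<dots> \<le> Liminf at_top (X f)" by (rule Li_lb[OF Ev_Ee[OF v f]])
  finally have L: "ereal (\<mu> f / (2 * \<rho>)) < Liminf at_top (X f)" .
  have "eventually (\<lambda>s. \<mu> f / (3 * \<rho>) * s \<le> real (Np s f)) at_top"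
    by (rule np_lower[OF fE _ _ L]) (use mu rho in \<open>auto simp: divide_strict_left_mono\<close>)
  moreover have "\<mu> f / (3 * \<rho>) > 0" using mu rho by simp
  ultimately show ?thesis by blast
qed

end


lemma powr_ge_base: "0 \<le> x \<Longrightarrow> x \<le> 1 \<Longrightarrow> 0 \<le> a \<Longrightarrow> a \<le> 1 \<Longrightarrow> x \<le> x powr (a::real)"
  using powr_mono'[of a 1 x] by (cases "x = 0") auto

lemma powr_le_base: "1 \<le> x \<Longrightarrow> 0 \<le> a \<Longrightarrow> a \<le> 1 \<Longrightarrow> x powr (a::real) \<le> x"
  using powr_mono[of a 1 x] by simp

context upath_mu begin

lemma g_eq:
  assumes K: "K > 0"
  shows "K powr \<alpha> / (K powr \<alpha> + \<rho> powr (- \<alpha>) * S) = (K powr \<alpha> * \<rho> powr \<alpha> / a0) * a0 / ((K powr \<alpha> * \<rho> powr \<alpha> / a0) * a0 + S)"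
proof -
  have r: "\<rho> powr \<alpha> > 0" using rho by simp
  have ri: "\<rho> powr (- \<alpha>) = 1 / \<rho> powr \<alpha>" by (simp add: powr_minus divide_inverse)
  have "(K powr \<alpha> * \<rho> powr \<alpha> / a0) * a0 = K powr \<alpha> * \<rho> powr \<alpha>" using a0_pos by simp
  moreover have "K powr \<alpha> / (K powr \<alpha> + \<rho> powr (- \<alpha>) * S) = K powr \<alpha> * \<rho> powr \<alpha> / (K powr \<alpha> * \<rho> powr \<alpha> + S)"
    using r unfolding ri by (simp add: field_simps)
  ultimately show ?thesis by simp
qed

lemma upper_K:
  fixes m :: nat
  assumes m: "2 \<le> m" and K: "K > 0" and LK: "Limsup at_top (X e) < ereal K"
  shows "Limsup at_top (X e) \<le> ereal ((1 + 1 / real m) * (max 1 (K powr \<alpha> * \<rho> powr \<alpha> / a0) * \<mu> e / (1 - 1 / real m) + 8 / real m))"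
proof -
  define \<tau> where "\<tau> = K powr \<alpha> * \<rho> powr \<alpha> / a0"
  have \<tau>: "\<tau> > 0" using K rho a0_pos by (simp add: \<tau>_def)
  define c where "c = 1 - 1 / real m"
  have c: "0 < c" "c \<le> 1" using m by (auto simp: c_def)
  define C where "C v = c * (\<rho> powr (- \<alpha>) * Sv v)" for v
  have C0: "C v \<ge> 0" for v using c Sv_nonneg[of v] by (simp add: C_def)
  have h1: "eventually (\<lambda>s. real (Np s e) \<le> K * s) at_top" by (rule np_upper[OF e LK])
  have h2: "eventually (\<lambda>s. C v * s powr \<alpha> \<le> (\<Sum>f\<in>Ev E v - {e}. pw (real (Np s f)) \<alpha>)) at_top"
    if v: "v \<in> e" for v
  proof -
    have finE: "finite (Ev E v - {e})" using Evfin[OF vV[OF v]] by simp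
    have each: "eventually (\<lambda>s. c * (\<mu> f / \<rho>) * s \<le> real (Np s f)) at_top" if f: "f \<in> Ev E v - {e}" for f
    proof -
      have fE: "f \<in> E" using f Ev_E by auto
      have mu: "\<mu> f > 0" by (rule nonvan[OF fE])
      have q: "\<mu> f / \<rho> > 0" using mu rho by simp
      have "1 - 1 / (2 * real m) < 1" using m by simp
      from mult_strict_right_mono[OF this q]
      have "ereal ((1 - 1 / (2 * real m)) * (\<mu> f / \<rho>)) < ereal (\<mu> f / \<rho>)" by simp
      also have "\<dots> \<le> Liminf at_top (X f)" by (rule Li_lb[OF Ev_Ee[OF v]]) (use f in auto)
      finally have L: "ereal ((1 - 1 / (2 * real m)) * (\<mu> f / \<rho>)) < Liminf at_top (X f)" .
      show ?thesis
      proof (rule np_lower[OF fE _ _ L])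
        show "0 < c * (\<mu> f / \<rho>)" using c q by (intro mult_pos_pos) auto
        have "c < 1 - 1 / (2 * real m)" using m by (simp add: c_def field_simps)
        then show "c * (\<mu> f / \<rho>) < (1 - 1 / (2 * real m)) * (\<mu> f / \<rho>)" using q by (rule mult_strict_right_mono)
      qed
    qed
    have all: "eventually (\<lambda>s. \<forall>f\<in>Ev E v - {e}. c * (\<mu> f / \<rho>) * s \<le> real (Np s f)) at_top"
      by (rule eventually_ball_finite[OF finE]) (use each in blast)
    show ?thesis using all eventually_gt_at_top[of "0::real"]
    proof eventually_elim
      case (elim s)
      have per: "c * (\<rho> powr (- \<alpha>) * \<mu> f powr \<alpha>) * s powr \<alpha> \<le> pw (real (Np s f)) \<alpha>"
        if f: "f \<in> Ev E v - {e}" for f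
      proof -
        have fE: "f \<in> E" using f Ev_E by auto
        have mu: "\<mu> f > 0" by (rule nonvan[OF fE])
        have "c * (\<rho> powr (- \<alpha>) * \<mu> f powr \<alpha>) * s powr \<alpha> \<le> c powr \<alpha> * (\<mu> f / \<rho>) powr \<alpha> * s powr \<alpha>"
        proof -
          have "c \<le> c powr \<alpha>" using c alpha by (intro powr_ge_base) auto
          moreover have "\<rho> powr (- \<alpha>) * \<mu> f powr \<alpha> = (\<mu> f / \<rho>) powr \<alpha>"
          proof -
            have "(\<mu> f / \<rho>) powr \<alpha> = \<mu> f powr \<alpha> / \<rho> powr \<alpha>" using mu rho by (simp add: powr_divide)
            then show ?thesis by (simp add: powr_minus divide_inverse mult.commute)
          qed
          ultimately show ?thesis using mu elim(2)
            by (intro mult_right_mono mult_mono) auto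
        qed
        also have "\<dots> = (c * (\<mu> f / \<rho>) * s) powr \<alpha>"
        proof -
          have q: "0 \<le> \<mu> f / \<rho>" using mu rho by simp
          have "(c * (\<mu> f / \<rho>) * s) powr \<alpha> = (c * (\<mu> f / \<rho>)) powr \<alpha> * s powr \<alpha>"
            by (rule powr_mult)
          also have "(c * (\<mu> f / \<rho>)) powr \<alpha> = c powr \<alpha> * (\<mu> f / \<rho>) powr \<alpha>"
            by (rule powr_mult)
          finally show ?thesis by simp
        qed
        also have "\<dots> \<le> real (Np s f) powr \<alpha>"
          using elim(1) f c mu rho elim(2) alpha by (intro powr_mono2) auto
        also have "\<dots> = pw (real (Np s f)) \<alpha>" by (rule pw_Np[OF fE, symmetric])
        finally show ?thesis .
      qed
      have "C v * s powr \<alpha> = (\<Sum>f\<in>Ev E v - {e}. c * (\<rho> powr (- \<alpha>) * \<mu> f powr \<alpha>) * s powr \<alpha>)"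
        unfolding C_def Sv_def by (simp add: sum_distrib_left sum_distrib_right mult.assoc)
      also have "\<dots> \<le> (\<Sum>f\<in>Ev E v - {e}. pw (real (Np s f)) \<alpha>)" by (intro sum_mono per)
      finally show ?case .
    qed
  qed
  define qu where "qu v = K powr \<alpha> / (K powr \<alpha> + C v)" for v
  have pu: "eventually (\<lambda>s. pv v s \<le> qu v) at_top" if v: "v \<in> e" for v
    unfolding qu_def by (rule pv_upper[OF v K C0 h1 h2[OF v]])
  have L1: "Limsup at_top (X e) \<le> ereal (\<Sum>v\<in>e. (1 + 1 / real m) * (qu v + 4 / real m))"
    by (rule Limsup_Nt[OF m nb pu]) auto
  have qub: "qu v \<le> max 1 \<tau> * (a0 / (a0 + Sv v)) / c" for v
  proof -
    have Kp: "K powr \<alpha> > 0" using K by simp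
    have "qu v \<le> K powr \<alpha> / (c * (K powr \<alpha> + \<rho> powr (- \<alpha>) * Sv v))"
    proof (unfold qu_def, rule divide_left_mono)
      have "c * K powr \<alpha> \<le> K powr \<alpha>" using c Kp by (simp add: mult_left_le_one_le)
      then show "c * (K powr \<alpha> + \<rho> powr (- \<alpha>) * Sv v) \<le> K powr \<alpha> + C v"
        by (simp add: C_def distrib_left)
      show "0 \<le> K powr \<alpha>" using Kp by simp
      have "0 \<le> \<rho> powr (- \<alpha>) * Sv v" using Sv_nonneg[of v] by simp
      then show "0 < (K powr \<alpha> + C v) * (c * (K powr \<alpha> + \<rho> powr (- \<alpha>) * Sv v))"
        using Kp C0[of v] c by (intro mult_pos_pos add_pos_nonneg) auto
    qed
    also have "\<dots> = (K powr \<alpha> / (K powr \<alpha> + \<rho> powr (- \<alpha>) * Sv v)) / c" by (simp add: field_simps)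
    also have "K powr \<alpha> / (K powr \<alpha> + \<rho> powr (- \<alpha>) * Sv v) = \<tau> * a0 / (\<tau> * a0 + Sv v)"
      unfolding \<tau>_def by (rule g_eq[OF K])
    also have "\<tau> * a0 / (\<tau> * a0 + Sv v) \<le> max 1 \<tau> * (a0 / (a0 + Sv v))"
      by (rule frac_max(1)[OF \<tau> a0_pos Sv_nonneg])
    finally show ?thesis using c by (simp add: divide_right_mono)
  qed
  have "(\<Sum>v\<in>e. (1 + 1 / real m) * (qu v + 4 / real m))
      \<le> (\<Sum>v\<in>e. (1 + 1 / real m) * (max 1 \<tau> * (a0 / (a0 + Sv v)) / c + 4 / real m))"
    using qub by (intro sum_mono mult_left_mono add_right_mono) auto
  also have "\<dots> = (1 + 1 / real m) * (max 1 \<tau> / c * (\<Sum>v\<in>e. a0 / (a0 + Sv v)) + real (card e) * (4 / real m))"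
    by (simp add: sum_distrib_left sum.distrib algebra_simps)
  also have "\<dots> = (1 + 1 / real m) * (max 1 \<tau> * \<mu> e / (1 - 1 / real m) + 8 / real m)"
    using card_f[OF e] by (simp add: equil_e[symmetric] c_def)
  finally show ?thesis using L1 unfolding \<tau>_def by (meson ereal_less_eq(3) order_trans)
qed

end


context upath_mu begin

lemma g_eq2:
  assumes K: "K > 0"
  shows "K powr \<alpha> / (K powr \<alpha> + \<rho> powr \<alpha> * S) = (K powr \<alpha> * \<rho> powr (- \<alpha>) / a0) * a0 / ((K powr \<alpha> * \<rho> powr (- \<alpha>) / a0) * a0 + S)"
proof -
  have r: "\<rho> powr \<alpha> > 0" using rho by simp
  have ri: "\<rho> powr (- \<alpha>) = 1 / \<rho> powr \<alpha>" by (simp add: powr_minus divide_inverse)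
  have "(K powr \<alpha> * \<rho> powr (- \<alpha>) / a0) * a0 = K powr \<alpha> * \<rho> powr (- \<alpha>)" using a0_pos by simp
  moreover have "K powr \<alpha> / (K powr \<alpha> + \<rho> powr \<alpha> * S) = K powr \<alpha> * \<rho> powr (- \<alpha>) / (K powr \<alpha> * \<rho> powr (- \<alpha>) + S)"
    using r unfolding ri by (simp add: field_simps)
  ultimately show ?thesis by simp
qed

lemma lower_K:
  fixes m :: nat
  assumes m: "2 \<le> m" and K: "K > 0" "K < K'" and LK: "ereal K' < Liminf at_top (X e)"
  shows "ereal ((1 - 1 / real m) * (min 1 (K powr \<alpha> * \<rho> powr (- \<alpha>) / a0) * \<mu> e / (1 + 1 / real m) - 8 / real m))
     \<le> Liminf at_top (X e)"
proof -
  define \<tau> where "\<tau> = K powr \<alpha> * \<rho> powr (- \<alpha>) / a0"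
  have \<tau>: "\<tau> > 0" using K rho a0_pos by (simp add: \<tau>_def)
  define c where "c = 1 + 1 / real m"
  have c: "1 < c" using m by (auto simp: c_def)
  define C where "C v = c * (\<rho> powr \<alpha> * Sv v)" for v
  have C0: "C v \<ge> 0" for v using c Sv_nonneg[of v] by (simp add: C_def)
  have h1: "eventually (\<lambda>s. K * s \<le> real (Np s e)) at_top" by (rule np_lower[OF e K LK])
  have h2: "eventually (\<lambda>s. (\<Sum>f\<in>Ev E v - {e}. pw (real (Np s f)) \<alpha>) \<le> C v * s powr \<alpha>) at_top"
    if v: "v \<in> e" for v
  proof -
    have finE: "finite (Ev E v - {e})" using Evfin[OF vV[OF v]] by simp
    have each: "eventually (\<lambda>s. real (Np s f) \<le> c * (\<rho> * \<mu> f) * s) at_top" if f: "f \<in> Ev E v - {e}" for f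
    proof -
      have fE: "f \<in> E" using f Ev_E by auto
      have mu: "\<mu> f > 0" by (rule nonvan[OF fE])
      have q: "\<rho> * \<mu> f > 0" using mu rho by simp
      have "Limsup at_top (X f) \<le> ereal (\<rho> * \<mu> f)" by (rule Ls_ub[OF Ev_Ee[OF v]]) (use f in auto)
      also have "ereal (\<rho> * \<mu> f) < ereal (c * (\<rho> * \<mu> f))" using mult_strict_right_mono[OF c q] by simp
      finally show ?thesis by (rule np_upper[OF fE])
    qed
    have all: "eventually (\<lambda>s. \<forall>f\<in>Ev E v - {e}. real (Np s f) \<le> c * (\<rho> * \<mu> f) * s) at_top"
      by (rule eventually_ball_finite[OF finE]) (use each in blast)
    show ?thesis using all eventually_gt_at_top[of "0::real"]
    proof eventually_elim
      case (elim s)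
      have per: "pw (real (Np s f)) \<alpha> \<le> c * (\<rho> powr \<alpha> * \<mu> f powr \<alpha>) * s powr \<alpha>"
        if f: "f \<in> Ev E v - {e}" for f
      proof -
        have fE: "f \<in> E" using f Ev_E by auto
        have mu: "\<mu> f > 0" by (rule nonvan[OF fE])
        have "pw (real (Np s f)) \<alpha> = real (Np s f) powr \<alpha>" by (rule pw_Np[OF fE])
        also have "\<dots> \<le> (c * (\<rho> * \<mu> f) * s) powr \<alpha>"
          using elim(1) f alpha by (intro powr_mono2) auto
        also have "\<dots> = c powr \<alpha> * (\<rho> powr \<alpha> * \<mu> f powr \<alpha>) * s powr \<alpha>" by (simp add: powr_mult)
        also have "\<dots> \<le> c * (\<rho> powr \<alpha> * \<mu> f powr \<alpha>) * s powr \<alpha>"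
        proof -
          have "c powr \<alpha> \<le> c" using c alpha by (intro powr_le_base) auto
          then show ?thesis using mu rho elim(2) by (intro mult_right_mono) auto
        qed
        finally show ?thesis .
      qed
      have "(\<Sum>f\<in>Ev E v - {e}. pw (real (Np s f)) \<alpha>) \<le> (\<Sum>f\<in>Ev E v - {e}. c * (\<rho> powr \<alpha> * \<mu> f powr \<alpha>) * s powr \<alpha>)"
        by (intro sum_mono per)
      also have "\<dots> = C v * s powr \<alpha>"
        unfolding C_def Sv_def by (simp add: sum_distrib_left sum_distrib_right mult.assoc)
      finally show ?case .
    qed
  qed
  define ql where "ql v = K powr \<alpha> / (K powr \<alpha> + C v)" for v
  have pl: "eventually (\<lambda>s. ql v \<le> pv v s) at_top" if v: "v \<in> e" for v
    unfolding ql_def by (rule pv_lower[OF v K(1) C0 h1 h2[OF v]])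
  have L1: "ereal (\<Sum>v\<in>e. (1 - 1 / real m) * (ql v - 4 / real m)) \<le> Liminf at_top (X e)"
    by (rule Liminf_Nt[OF m nb pl]) auto
  have qlb: "min 1 \<tau> * (a0 / (a0 + Sv v)) / c \<le> ql v" for v
  proof -
    have Kp: "K powr \<alpha> > 0" using K by simp
    have "min 1 \<tau> * (a0 / (a0 + Sv v)) \<le> \<tau> * a0 / (\<tau> * a0 + Sv v)"
      by (rule frac_max(2)[OF \<tau> a0_pos Sv_nonneg])
    also have "\<tau> * a0 / (\<tau> * a0 + Sv v) = K powr \<alpha> / (K powr \<alpha> + \<rho> powr \<alpha> * Sv v)"
      unfolding \<tau>_def by (rule g_eq2[OF K(1), symmetric])
    finally have 1: "min 1 \<tau> * (a0 / (a0 + Sv v)) / c \<le> (K powr \<alpha> / (K powr \<alpha> + \<rho> powr \<alpha> * Sv v)) / c"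
      using c by (intro divide_right_mono) auto
    also have "\<dots> = K powr \<alpha> / (c * (K powr \<alpha> + \<rho> powr \<alpha> * Sv v))" by (simp add: field_simps)
    also have "\<dots> \<le> ql v"
    proof (unfold ql_def, rule divide_left_mono)
      have "K powr \<alpha> \<le> c * K powr \<alpha>" using c Kp by simp
      then show "K powr \<alpha> + C v \<le> c * (K powr \<alpha> + \<rho> powr \<alpha> * Sv v)"
        by (simp add: C_def distrib_left)
      show "0 \<le> K powr \<alpha>" using Kp by simp
      have "0 \<le> \<rho> powr \<alpha> * Sv v" using Sv_nonneg[of v] by simp
      then show "0 < c * (K powr \<alpha> + \<rho> powr \<alpha> * Sv v) * (K powr \<alpha> + C v)"
        using Kp C0[of v] c by (intro mult_pos_pos add_pos_nonneg) auto
    qed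
    finally show ?thesis .
  qed
  have "(1 - 1 / real m) * (min 1 \<tau> * \<mu> e / (1 + 1 / real m) - 8 / real m)
      = (\<Sum>v\<in>e. (1 - 1 / real m) * (min 1 \<tau> * (a0 / (a0 + Sv v)) / c - 4 / real m))"
  proof -
    have "(\<Sum>v\<in>e. (1 - 1 / real m) * (min 1 \<tau> * (a0 / (a0 + Sv v)) / c - 4 / real m))
      = (1 - 1 / real m) * (min 1 \<tau> / c * (\<Sum>v\<in>e. a0 / (a0 + Sv v)) - real (card e) * (4 / real m))"
      by (simp add: sum_distrib_left sum_subtractf algebra_simps)
    also have "\<dots> = (1 - 1 / real m) * (min 1 \<tau> * \<mu> e / (1 + 1 / real m) - 8 / real m)"
      using card_f[OF e] by (simp add: equil_e[symmetric] c_def)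
    finally show ?thesis by simp
  qed
  also have "\<dots> \<le> (\<Sum>v\<in>e. (1 - 1 / real m) * (ql v - 4 / real m))"
    using qlb m by (intro sum_mono mult_left_mono diff_right_mono) auto
  finally show ?thesis using L1 unfolding \<tau>_def by (meson ereal_less_eq(3) order_trans)
qed

end


context upath_mu begin

lemma Li_le_Ls: "Liminf at_top (X f) \<le> Limsup at_top (X f)"
  by (rule Liminf_le_Limsup) simp

lemma path_upper: "Limsup at_top (X e) \<le> ereal (\<rho> powr (2 * \<alpha>) * \<mu> e)"
proof -
  have mu: "\<mu> e > 0" by (rule nonvan[OF e])
  have up: "Limsup at_top (X e) \<le> ereal (\<rho> * \<mu> e)" by (rule Ls_ub[OF e_Ee])
  have lo: "ereal (\<mu> e / \<rho>) \<le> Limsup at_top (X e)" using Li_lb[OF e_Ee] Li_le_Ls[of e] by (rule order_trans)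
  define u where "u = real_of_ereal (Limsup at_top (X e))"
  have Lu: "Limsup at_top (X e) = ereal u" unfolding u_def using up lo
    by (intro ereal_real'[symmetric]) auto
  have u0: "u > 0"
  proof -
    have "\<mu> e / \<rho> \<le> u" using lo Lu by simp
    moreover have "\<mu> e / \<rho> > 0" using mu rho by simp
    ultimately show ?thesis by linarith
  qed
  define h where "h j = (1 + 1 / real j) * (max 1 ((u + 1 / real j) powr \<alpha> * \<rho> powr \<alpha> / a0) * \<mu> e / (1 - 1 / real j) + 8 * (1 / real j))" for j :: nat
  have ev: "eventually (\<lambda>j. u \<le> h j) sequentially"
    using eventually_ge_at_top[of "2::nat"]
  proof eventually_elim
    case (elim j)
    have K: "u + 1 / real j > 0" using u0 by (simp add: add_pos_nonneg)
    have LK: "Limsup at_top (X e) < ereal (u + 1 / real j)" using Lu elim by simp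
    have "ereal u \<le> ereal ((1 + 1 / real j) * (max 1 ((u + 1 / real j) powr \<alpha> * \<rho> powr \<alpha> / a0) * \<mu> e / (1 - 1 / real j) + 8 / real j))"
      using upper_K[OF elim K LK] Lu by simp
    then show ?case by (simp add: h_def)
  qed
  have lim: "h \<longlonglongrightarrow> (1 + 0) * (max 1 ((u + 0) powr \<alpha> * \<rho> powr \<alpha> / a0) * \<mu> e / (1 - 0) + 8 * 0)"
    unfolding h_def using u0 a0_pos by (intro tendsto_intros) auto
  have "u \<le> (1 + 0) * (max 1 ((u + 0) powr \<alpha> * \<rho> powr \<alpha> / a0) * \<mu> e / (1 - 0) + 8 * 0)"
    by (rule tendsto_lowerbound[OF lim ev]) simp
  then have hu: "u \<le> max 1 (u powr \<alpha> * \<rho> powr \<alpha> / a0) * \<mu> e" by simp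
  define x where "x = u / \<mu> e"
  have x0: "x > 0" using u0 mu by (simp add: x_def)
  have "u powr \<alpha> / a0 = x powr \<alpha>" using u0 mu by (simp add: x_def a0_def powr_divide)
  then have "u powr \<alpha> * \<rho> powr \<alpha> / a0 = x powr \<alpha> * \<rho> powr \<alpha>" by (metis times_divide_eq_left)
  then have "u \<le> max 1 (x powr \<alpha> * \<rho> powr \<alpha>) * \<mu> e" using hu by (simp only:)
  then have "u / \<mu> e \<le> max 1 (x powr \<alpha> * \<rho> powr \<alpha>)" using mu by (simp add: pos_divide_le_eq)
  then have "x \<le> max 1 (x powr \<alpha> * \<rho> powr \<alpha>)" by (simp only: x_def[symmetric])
  then have "x \<le> \<rho> powr (2 * \<alpha>)" by (rule upper_final[OF x0 rho alpha(1) ahalf])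
  then have "u \<le> \<rho> powr (2 * \<alpha>) * \<mu> e" using mu by (simp add: x_def divide_simps)
  then show ?thesis using Lu by simp
qed

lemma path_lower: "ereal (\<rho> powr (- 2 * \<alpha>) * \<mu> e) \<le> Liminf at_top (X e)"
proof -
  have mu: "\<mu> e > 0" by (rule nonvan[OF e])
  have up: "Liminf at_top (X e) \<le> ereal (\<rho> * \<mu> e)" using Li_le_Ls[of e] Ls_ub[OF e_Ee] by (rule order_trans)
  have lo: "ereal (\<mu> e / \<rho>) \<le> Liminf at_top (X e)" by (rule Li_lb[OF e_Ee])
  define l where "l = real_of_ereal (Liminf at_top (X e))"
  have Ll: "Liminf at_top (X e) = ereal l" unfolding l_def using up lo
    by (intro ereal_real'[symmetric]) auto
  have l0: "l > 0"
  proof -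
    have "\<mu> e / \<rho> \<le> l" using lo Ll by simp
    moreover have "\<mu> e / \<rho> > 0" using mu rho by simp
    ultimately show ?thesis by linarith
  qed
  define h where "h j = (1 - 1 / real j) * (min 1 ((l * (1 - 1 / real j)) powr \<alpha> * \<rho> powr (- \<alpha>) / a0) * \<mu> e / (1 + 1 / real j) - 8 * (1 / real j))" for j :: nat
  have ev: "eventually (\<lambda>j. h j \<le> l) sequentially"
    using eventually_ge_at_top[of "2::nat"]
  proof eventually_elim
    case (elim j)
    have j: "real j \<ge> 2" using elim by simp
    have K: "l * (1 - 1 / real j) > 0" using l0 j by (simp add: field_simps)
    have KK: "l * (1 - 1 / real j) < l * (1 - 1 / (2 * real j))" using l0 j by (simp add: field_simps)
    have LK: "ereal (l * (1 - 1 / (2 * real j))) < Liminf at_top (X e)" using Ll l0 j by (simp add: field_simps)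
    have "ereal ((1 - 1 / real j) * (min 1 ((l * (1 - 1 / real j)) powr \<alpha> * \<rho> powr (- \<alpha>) / a0) * \<mu> e / (1 + 1 / real j) - 8 / real j)) \<le> ereal l"
      using lower_K[OF elim K KK LK] Ll by simp
    then show ?case by (simp add: h_def)
  qed
  have lim: "h \<longlonglongrightarrow> (1 - 0) * (min 1 ((l * (1 - 0)) powr \<alpha> * \<rho> powr (- \<alpha>) / a0) * \<mu> e / (1 + 0) - 8 * 0)"
    unfolding h_def using l0 a0_pos by (intro tendsto_intros) auto
  have "(1 - 0) * (min 1 ((l * (1 - 0)) powr \<alpha> * \<rho> powr (- \<alpha>) / a0) * \<mu> e / (1 + 0) - 8 * 0) \<le> l"
    by (rule tendsto_upperbound[OF lim ev]) simp
  then have hl: "min 1 (l powr \<alpha> * \<rho> powr (- \<alpha>) / a0) * \<mu> e \<le> l" by simp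
  define x where "x = l / \<mu> e"
  have x0: "x > 0" using l0 mu by (simp add: x_def)
  have "l powr \<alpha> / a0 = x powr \<alpha>" using l0 mu by (simp add: x_def a0_def powr_divide)
  then have "l powr \<alpha> * \<rho> powr (- \<alpha>) / a0 = x powr \<alpha> * \<rho> powr (- \<alpha>)" by (metis times_divide_eq_left)
  then have "min 1 (x powr \<alpha> * \<rho> powr (- \<alpha>)) * \<mu> e \<le> l" using hl by (simp only:)
  then have "min 1 (x powr \<alpha> * \<rho> powr (- \<alpha>)) \<le> l / \<mu> e" using mu by (simp add: pos_le_divide_eq)
  then have "min 1 (x powr \<alpha> * \<rho> powr (- \<alpha>)) \<le> x" by (simp only: x_def[symmetric])
  then have "\<rho> powr (- 2 * \<alpha>) \<le> x" by (rule lower_final[OF x0 rho alpha(1) ahalf])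
  then have "\<rho> powr (- 2 * \<alpha>) * \<mu> e \<le> l" using mu by (simp add: x_def divide_simps)
  then show ?thesis using Ll by simp
qed

end


lemma box_dom: "T \<ge> 0 \<Longrightarrow> {0..T} \<times> {0..1} \<in> ppp_domain"
proof -
  assume T: "T \<ge> 0"
  have s: "{0..T} \<times> {0..1} \<in> sets (lborel::(real\<times>real) measure)"
    by (simp add: lborel_prod[symmetric])
  have "emeasure (lborel::(real\<times>real) measure) ({0..T} \<times> {0..1}) = emeasure (lborel \<Otimes>\<^sub>M lborel) ({0..T} \<times> {0..(1::real)})"
    by (simp add: lborel_prod)
  also have "\<dots> = emeasure lborel {0..T} * emeasure lborel {0..(1::real)}"
    by (rule lborel.emeasure_pair_measure_Times) auto
  also have "\<dots> = ennreal T" using T by simp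
  finally have e: "emeasure lborel ({0..T} \<times> {0..(1::real)}) = ennreal T" .
  show ?thesis unfolding ppp_domain_def using s e by auto
qed

theorem mainTheorem5:
  fixes V :: "'a set" and E :: "'a set set" and \<Delta> :: nat and \<alpha> :: real
    and M :: "'w measure" and P :: "'a \<Rightarrow> 'w \<Rightarrow> (real \<times> real) set"
    and enum :: "'a \<Rightarrow> nat \<Rightarrow> 'a set"
    and Npre :: "'w \<Rightarrow> real \<Rightarrow> 'a set \<Rightarrow> nat"
    and \<mu> :: "'a set \<Rightarrow> real" and \<rho> :: real and e :: "'a set"
  assumes graph: "countable_graph_bdeg V E \<Delta>"
    and alpha: "0 \<le> \<alpha>" "\<alpha> < 1/2"
    and ppp: "iid_ppp_family M V P"
    and enum: "\<forall>v\<in>V. bij_betw (enum v) {..<card (Ev E v)} (Ev E v)"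
    and proc: "urn_pre M E \<alpha> enum P Npre"
    and equil: "equilibrium E \<alpha> \<mu>" and nonvan: "non_vanishing E \<mu>"
    and mu_lb: "\<forall>e'\<in>E. \<mu> e' \<ge> 2 / (real \<Delta> powr (1 / (1 - \<alpha>)))"
    and rho: "\<rho> > 1"
    and e: "e \<in> E"
  shows "AE \<omega> in M.
           (\<forall>e'\<in>Ee E e. cluster (urn_N E \<alpha> enum P Npre) \<omega> e'
                            \<subseteq> {ereal (\<mu> e' / \<rho>) .. ereal (\<rho> * \<mu> e')})
           \<longrightarrow> cluster (urn_N E \<alpha> enum P Npre) \<omega> e
                 \<subseteq> {ereal (\<rho> powr (- 2 * \<alpha>) * \<mu> e) .. ereal (\<rho> powr (2 * \<alpha>) * \<mu> e)}"
proof -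
  have cV: "countable V" and Esub: "\<And>f. f \<in> E \<Longrightarrow> f \<subseteq> V \<and> card f = 2"
    and Evfin: "\<And>v. v \<in> V \<Longrightarrow> finite (Ev E v)"
    using graph unfolding countable_graph_bdeg_def by auto
  have A1: "AE \<omega> in M. \<forall>t. \<forall>f\<in>E. Npre \<omega> t f = 1 + (\<Sum>v\<in>f. card {(s, u) \<in> P v \<omega>. 0 \<le> s \<and> s < t \<and>
                                        selects E \<alpha> enum v (Npre \<omega> s) u f})"
    using proc unfolding urn_pre_def by simp
  have A2: "AE \<omega> in M. \<forall>v\<in>V. \<forall>T::nat. finite (P v \<omega> \<inter> ({0..real T} \<times> {0..1}))"
  proof (subst AE_ball_countable[OF cV], intro ballI, subst AE_all_countable, intro allI)
    fix v T assume v: "v \<in> V"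
    show "AE \<omega> in M. finite (P v \<omega> \<inter> ({0..real T} \<times> {0..1}))"
      by (rule ppp_facts(2)[OF ppp v box_dom]) simp
  qed
  have A3: "AE \<omega> in M. \<forall>v\<in>V. \<forall>k l m::nat. k < l \<longrightarrow> l \<le> m \<longrightarrow> 2 \<le> m \<longrightarrow>
       eventually (\<lambda>n. \<bar>real (card (P v \<omega> \<inter> wbox n (real k / real m) (real l / real m)))
            - (2 * real n + 1) * (real l / real m - real k / real m)\<bar>
        < (1 / real m) * ((2 * real n + 1) * (real l / real m - real k / real m))) sequentially"
  proof (subst AE_ball_countable[OF cV], intro ballI, subst AE_all_countable, intro allI,
         subst AE_all_countable, intro allI, subst AE_all_countable, intro allI)
    fix v k l m assume v: "v \<in> V"
    show "AE \<omega> in M. k < l \<longrightarrow> l \<le> m \<longrightarrow> 2 \<le> m \<longrightarrow>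
       eventually (\<lambda>n. \<bar>real (card (P v \<omega> \<inter> wbox n (real k / real m) (real l / real m)))
            - (2 * real n + 1) * (real l / real m - real k / real m)\<bar>
        < (1 / real m) * ((2 * real n + 1) * (real l / real m - real k / real m))) sequentially"
    proof (cases "k < l \<and> l \<le> m \<and> 2 \<le> m")
      case True
      have "AE \<omega> in M. eventually (\<lambda>n. \<bar>real (card (P v \<omega> \<inter> wbox n (real k / real m) (real l / real m)))
            - (2 * real n + 1) * (real l / real m - real k / real m)\<bar>
        < (1 / real m) * ((2 * real n + 1) * (real l / real m - real k / real m))) sequentially"
        by (rule window_lln[OF ppp v]) (use True in \<open>auto simp: divide_right_mono divide_strict_right_mono\<close>)
      then show ?thesis by (rule AE_mp) auto
    next
      case False
      then show ?thesis by auto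
    qed
  qed
  show ?thesis
  proof (rule AE_mp[OF AE_conjI[OF A1 AE_conjI[OF A2 A3]]], rule AE_I2, intro impI)
    fix \<omega> assume \<omega>: "(\<forall>t. \<forall>f\<in>E. Npre \<omega> t f = 1 + (\<Sum>v\<in>f. card {(s, u) \<in> P v \<omega>. 0 \<le> s \<and> s < t \<and>
                                        selects E \<alpha> enum v (Npre \<omega> s) u f})) \<and>
      (\<forall>v\<in>V. \<forall>T::nat. finite (P v \<omega> \<inter> ({0..real T} \<times> {0..1}))) \<and>
      (\<forall>v\<in>V. \<forall>k l m::nat. k < l \<longrightarrow> l \<le> m \<longrightarrow> 2 \<le> m \<longrightarrow>
       eventually (\<lambda>n. \<bar>real (card (P v \<omega> \<inter> wbox n (real k / real m) (real l / real m)))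
            - (2 * real n + 1) * (real l / real m - real k / real m)\<bar>
        < (1 / real m) * ((2 * real n + 1) * (real l / real m - real k / real m))) sequentially)"
    assume hyp: "\<forall>e'\<in>Ee E e. cluster (urn_N E \<alpha> enum P Npre) \<omega> e'
                            \<subseteq> {ereal (\<mu> e' / \<rho>) .. ereal (\<rho> * \<mu> e')}"
    have finR: "finite (P v \<omega> \<inter> ({0..T} \<times> {0..1}))" if v: "v \<in> V" for v and T :: real
    proof -
      have "P v \<omega> \<inter> ({0..T} \<times> {0..1}) \<subseteq> P v \<omega> \<inter> ({0..real (nat \<lceil>T\<rceil>)} \<times> {0..1})"
      proof (intro Int_mono order_refl Sigma_mono subsetI)
        fix x assume "x \<in> {0..T}"
        then show "x \<in> {0..real (nat \<lceil>T\<rceil>)}"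
          using real_nat_ceiling_ge[of T] by (simp only: atLeastAtMost_iff) (meson order_trans)
      qed
      moreover have "finite (P v \<omega> \<inter> ({0..real (nat \<lceil>T\<rceil>)} \<times> {0..1}))" using \<omega> v by blast
      ultimately show ?thesis by (rule finite_subset)
    qed
    interpret U: upath V E \<alpha> enum "\<lambda>v. P v \<omega>" "Npre \<omega>" e
    proof
      show "\<And>f. f \<in> E \<Longrightarrow> f \<subseteq> V \<and> card f = 2" by (rule Esub)
      show "\<And>v. v \<in> V \<Longrightarrow> finite (Ev E v)" by (rule Evfin)
      show "\<And>v. v \<in> V \<Longrightarrow> bij_betw (enum v) {..<card (Ev E v)} (Ev E v)" using enum by blast
      show "0 \<le> \<alpha>" "\<alpha> \<le> 1" using alpha by auto
      show "e \<in> E" by (rule e)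
      show "\<And>t f. f \<in> E \<Longrightarrow> Npre \<omega> t f = 1 + (\<Sum>v\<in>f. card {(s, u) \<in> P v \<omega>. 0 \<le> s \<and> s < t \<and>
                                        selects E \<alpha> enum v (Npre \<omega> s) u f})" using \<omega> by blast
      show "\<And>v T. v \<in> V \<Longrightarrow> finite (P v \<omega> \<inter> ({0..T} \<times> {0..1}))" by (rule finR)
      show "\<And>v k l m. v \<in> V \<Longrightarrow> k < l \<Longrightarrow> l \<le> m \<Longrightarrow> 2 \<le> m \<Longrightarrow>
       eventually (\<lambda>n. \<bar>real (card (P v \<omega> \<inter> wbox n (real k / real m) (real l / real m)))
            - (2 * real n + 1) * (real l / real m - real k / real m)\<bar>
        < (1 / real m) * ((2 * real n + 1) * (real l / real m - real k / real m))) sequentially"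
        using \<omega> by blast
    qed
    have NtN: "U.Nt t f = urn_N E \<alpha> enum P Npre \<omega> t f" for t f
      by (simp add: U.Nt_def urn_N_def)
    have cl: "cluster (urn_N E \<alpha> enum P Npre) \<omega> f = {Liminf at_top (U.X f) .. Limsup at_top (U.X f)}" for f
      by (simp add: cluster_def NtN)
    interpret UM: upath_mu V E \<alpha> enum "\<lambda>v. P v \<omega>" "Npre \<omega>" e \<mu> \<rho>
    proof
      show "equilibrium E \<alpha> \<mu>" by (rule equil)
      show "\<And>f. f \<in> E \<Longrightarrow> 0 < \<mu> f" using nonvan by (simp add: non_vanishing_def)
      show "1 < \<rho>" by (rule rho)
      show "\<alpha> \<le> 1/2" using alpha by simp
      fix f assume f: "f \<in> Ee E e"
      have sub: "{Liminf at_top (U.X f) .. Limsup at_top (U.X f)} \<subseteq> {ereal (\<mu> f / \<rho>) .. ereal (\<rho> * \<mu> f)}"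
        using hyp f cl by auto
      have le: "Liminf at_top (U.X f) \<le> Limsup at_top (U.X f)" by (rule Liminf_le_Limsup) simp
      show "ereal (\<mu> f / \<rho>) \<le> Liminf at_top (U.X f)" using sub le by auto
      show "Limsup at_top (U.X f) \<le> ereal (\<rho> * \<mu> f)" using sub le by auto
    qed
    show "cluster (urn_N E \<alpha> enum P Npre) \<omega> e
                 \<subseteq> {ereal (\<rho> powr (- 2 * \<alpha>) * \<mu> e) .. ereal (\<rho> powr (2 * \<alpha>) * \<mu> e)}"
      unfolding cl using UM.path_lower UM.path_upper by auto
  qed
qed


end
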